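(* Let $n,k,d$ be integers with $k < d \le n-1$, put $q = d-k+1$, and suppose $n = (t-1)q + s$ for integers $t > 1$ and $1 \le s \le d-k$. Let $\alpha = q^t$. Let $\mathcal{N} = \{(j,\theta): j\in[t-1],\ \theta\in\{0,\dots,q-1\}\} \cup \{(t,\theta): \theta\in\{0,\dots,s-1\}\}$ (so $|\mathcal{N}| = n$), and index node $(j,\theta)$ by $\iota(j,\theta) = (j-1)q+\theta+1 \in [n]$. Let $\mathbb{F}_Q$ be a finite field, let $a_1,\dots,a_{n-k},b_1,\dots,b_n$ be $2n-k$ distinct elements of $\mathbb{F}_Q$, and let $H_{MDS}$ be the $(n-k)\times n$ Cauchy matrix with entries $(H_{MDS})_{r,m} = \frac{1}{a_r - b_m}$. For $\rho \in \mathbb{F}_Q$, define the $(n-k)\alpha \times n\alpha$ matrix $\mathbf{H}_\rho = H_{MDS}\otimes \mathbf{I}_\alpha + \mathbf{E}^{\rho}$ as follows. Rows are indexed by pairs $(r,x)$ with $r\in[n-k]$, $x=(x_1,\dots,x_t)\in\{0,\dots,q-1\}^t$; columns are indexed by pairs $(v,y)$ with $v\in\mathcal{N}$, $y\in\{0,\dots,q-1\}^t$ (the column block of node $v$ being the $\iota(v)$-th block of $\alpha$ columns, with a fixed ordering of $\{0,\dots,q-1\}^t$ used consistently for rows and columns within blocks). Then $$(\mathbf{H}_\rho)_{(r,x),(v,y)} = \frac{1}{a_r - b_{\iota(v)}}\,\mathbb{1}_{\{x=y\}} + \rho\cdot \mathbb{1}_{\{r>n-d\ \text{and}\ \exists j\in[t]:\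 v=(j,x_j),\ y = x - \Delta e_j\}},$$ where $\Delta = r-(n-d)\in[1,d-k]$, $e_j$ is the $j$-th unit vector, and $x-\Delta e_j$ is computed coordinatewise modulo $q$ (for $j=t$ the condition can only hold when $x_t < s$, since node $(t,x_t)$ exists only then). Let $\mathcal{C}_\rho = \{\mathbf{c}\in\mathbb{F}_Q^{n\alpha} : \mathbf{H}_\rho \mathbf{c} = 0\}$. Then, if $Q$ is sufficiently large, there exists $\rho\in\mathbb{F}_Q^{\ast}$ such that $\mathcal{C}_\rho$ is an MDS vector code, i.e., an $[n, k\alpha, d_{\min}, \alpha]_Q$ linear vector code with $d_{\min} = n-k+1$.
   Context: A vector $\mathbf{c}\in\mathbb{F}_Q^{n\alpha}$ is viewed as $n$ vector symbols $\mathbf{c}_m = (c_{(m-1)\alpha+1},\dots,c_{m\alpha})$, $m\in[n]$ (the $m$-th symbol being the contents of the node $v$ with $\iota(v)=m$). The Hamming distance between $\mathbf{x},\mathbf{y}\in\mathbb{F}_Q^{n\alpha}$ is $d_H(\mathbf{x},\mathbf{y}) = \sum_{m=1}^n \mathbb{1}_{\{\mathbf{x}_m\neq \mathbf{y}_m\}}$. A linear subspace $\mathcal{C}\subseteq\mathbb{F}_Q^{n\alpha}$ of $\mathbb{F}_Q$-dimension $K$ with minimum (nonzero-pair) distance $d_{\min}$ under $d_H$ is called an $[n,K,d_{\min},\alpha]_Q$ vector code. $\mathbf{I}_\alpha$ is the $\alpha\times\alpha$ identity matrix and $\otimes$ the Kronecker product. $[m]=\{1,\dots,m\}$, and $\mathbb{1}_{\{\cdot\}}$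 is the indicator function. *)

theory Defs
  imports "HOL-Algebra.Ring" "HOL-Library.FuncSet"
begin

definition cs_states :: "nat \<Rightarrow> nat \<Rightarrow> (nat \<Rightarrow> nat) set" where
  "cs_states t q = PiE {1..t} (\<lambda>_. {..<q})"

definition cs_nodes :: "nat \<Rightarrow> nat \<Rightarrow> nat \<Rightarrow> (nat \<times> nat) set" where
  "cs_nodes t q s = {(j,\<theta>). 1 \<le> j \<and> j \<le> t - 1 \<and> \<theta> < q} \<union> {(j,\<theta>). j = t \<and> \<theta> < s}"

definition cs_iota :: "nat \<Rightarrow> nat \<times> nat \<Rightarrow> nat" where
  "cs_iota q v = (fst v - 1) * q + snd v + 1"

definition cs_shift :: "nat \<Rightarrow> (nat \<Rightarrow> nat) \<Rightarrow> nat \<Rightarrow> nat \<Rightarrow> (nat \<Rightarrow> nat)" where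
  "cs_shift q x j \<Delta> = x(j := nat ((int (x j) - int \<Delta>) mod int q))"

definition cs_H :: "('f, 'm) ring_scheme \<Rightarrow> (nat \<Rightarrow> 'f) \<Rightarrow> (nat \<Rightarrow> 'f) \<Rightarrow> nat \<Rightarrow> nat \<Rightarrow> nat \<Rightarrow> nat
    \<Rightarrow> 'f \<Rightarrow> nat \<times> (nat \<Rightarrow> nat) \<Rightarrow> (nat \<times> nat) \<times> (nat \<Rightarrow> nat) \<Rightarrow> 'f" where
  "cs_H R a b n d t q \<rho> row col =
     (let r = fst row; x = snd row; v = fst col; y = snd col; \<Delta> = r - (n - d) in
      add R
        (if x = y then m_inv R (a_minus R (a r) (b (cs_iota q v))) else zero R)
        (if n - d < r \<and> (\<exists>j\<in>{1..t}. v = (j, x j) \<and> y = cs_shift q x j \<Delta>) then \<rho> else zero R))"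

definition cs_code :: "('f, 'm) ring_scheme \<Rightarrow> (nat \<Rightarrow> 'f) \<Rightarrow> (nat \<Rightarrow> 'f) \<Rightarrow> nat \<Rightarrow> nat \<Rightarrow> nat
    \<Rightarrow> nat \<Rightarrow> nat \<Rightarrow> 'f \<Rightarrow> ((nat \<times> nat) \<times> (nat \<Rightarrow> nat) \<Rightarrow> 'f) set" where
  "cs_code R a b n k d t s \<rho> =
     (let q = d - k + 1 in
      {c \<in> PiE (cs_nodes t q s \<times> cs_states t q) (\<lambda>_. carrier R).
         \<forall>r\<in>{1..n-k}. \<forall>x\<in>cs_states t q.
           finsum R (\<lambda>col. mult R (cs_H R a b n d t q \<rho> (r, x) col) (c col))
                    (cs_nodes t q s \<times> cs_states t q) = zero R})"

(* Generic vector-code notions: vectors over the coordinate set V \<times> Y, the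
   symbols being indexed by V (each symbol is a vector in F^Y). *)
definition hamming :: "'v set \<Rightarrow> 'y set \<Rightarrow> ('v \<times> 'y \<Rightarrow> 'f) \<Rightarrow> ('v \<times> 'y \<Rightarrow> 'f) \<Rightarrow> nat" where
  "hamming V Y c c' = card {v \<in> V. (\<lambda>y\<in>Y. c (v, y)) \<noteq> (\<lambda>y\<in>Y. c' (v, y))}"

definition lin_subspace :: "('f, 'm) ring_scheme \<Rightarrow> 'i set \<Rightarrow> ('i \<Rightarrow> 'f) set \<Rightarrow> bool" where
  "lin_subspace R I C \<longleftrightarrow> C \<subseteq> PiE I (\<lambda>_. carrier R) \<and> (\<lambda>i\<in>I. zero R) \<in> C \<and>
     (\<forall>u\<in>C. \<forall>w\<in>C. (\<lambda>i\<in>I. add R (u i) (w i)) \<in> C) \<and>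
     (\<forall>l\<in>carrier R. \<forall>u\<in>C. (\<lambda>i\<in>I. mult R l (u i)) \<in> C)"

definition lin_comb :: "('f, 'm) ring_scheme \<Rightarrow> 'i set \<Rightarrow> ('i \<Rightarrow> 'f) set \<Rightarrow> (('i \<Rightarrow> 'f) \<Rightarrow> 'f) \<Rightarrow> ('i \<Rightarrow> 'f)" where
  "lin_comb R I B f = (\<lambda>i\<in>I. finsum R (\<lambda>u. mult R (f u) (u i)) B)"

definition lin_indep :: "('f, 'm) ring_scheme \<Rightarrow> 'i set \<Rightarrow> ('i \<Rightarrow> 'f) set \<Rightarrow> bool" where
  "lin_indep R I B \<longleftrightarrow> finite B \<and>
     (\<forall>f \<in> B \<rightarrow> carrier R. lin_comb R I B f = (\<lambda>i\<in>I. zero R) \<longrightarrow> (\<forall>u\<in>B. f u = zero R))"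

definition lin_span :: "('f, 'm) ring_scheme \<Rightarrow> 'i set \<Rightarrow> ('i \<Rightarrow> 'f) set \<Rightarrow> ('i \<Rightarrow> 'f) set" where
  "lin_span R I B = {lin_comb R I B f | f. f \<in> B \<rightarrow> carrier R}"

definition has_dim :: "('f, 'm) ring_scheme \<Rightarrow> 'i set \<Rightarrow> ('i \<Rightarrow> 'f) set \<Rightarrow> nat \<Rightarrow> bool" where
  "has_dim R I C K \<longleftrightarrow> (\<exists>B. B \<subseteq> C \<and> card B = K \<and> lin_indep R I B \<and> lin_span R I B = C)"

definition is_vector_code :: "('f, 'm) ring_scheme \<Rightarrow> 'v set \<Rightarrow> 'y set \<Rightarrow> ('v \<times> 'y \<Rightarrow> 'f) set
    \<Rightarrow> nat \<Rightarrow> nat \<Rightarrow> nat \<Rightarrow> nat \<Rightarrow> bool" where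
  "is_vector_code R V Y C n K dmin \<alpha> \<longleftrightarrow> card V = n \<and> card Y = \<alpha> \<and>
     lin_subspace R (V \<times> Y) C \<and> has_dim R (V \<times> Y) C K \<and>
     (\<forall>c\<in>C. \<forall>c'\<in>C. c \<noteq> c' \<longrightarrow> dmin \<le> hamming V Y c c') \<and>
     (\<exists>c\<in>C. \<exists>c'\<in>C. c \<noteq> c' \<and> hamming V Y c c' = dmin)"

end

theory Submission
  imports Defs
begin


definition mv :: "('f,'m) ring_scheme \<Rightarrow> ('i \<Rightarrow> 'j \<Rightarrow> 'f) \<Rightarrow> 'j set \<Rightarrow> ('j \<Rightarrow> 'f) \<Rightarrow> 'i \<Rightarrow> 'f" where
  "mv R M J w i = finsum R (\<lambda>j. mult R (M i j) (w j)) J"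

lemma (in abelian_monoid) finsum_swap:
  assumes "finite A" "finite B" "\<And>a b. a \<in> A \<Longrightarrow> b \<in> B \<Longrightarrow> f a b \<in> carrier G"
  shows "(\<Oplus>a\<in>A. \<Oplus>b\<in>B. f a b) = (\<Oplus>b\<in>B. \<Oplus>a\<in>A. f a b)"
  using assms(1,3)
proof (induction A rule: finite_induct)
  case empty
  then show ?case by (simp add: finsum_zero)
next
  case (insert x F)
  have "(\<Oplus>a\<in>insert x F. \<Oplus>b\<in>B. f a b) = (\<Oplus>b\<in>B. f x b) \<oplus> (\<Oplus>a\<in>F. \<Oplus>b\<in>B. f a b)"
    using insert by (subst finsum_insert) (auto intro!: finsum_closed)
  also have "\<dots> = (\<Oplus>b\<in>B. f x b) \<oplus> (\<Oplus>b\<in>B. \<Oplus>a\<in>F. f a b)"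
    using insert by simp
  also have "\<dots> = (\<Oplus>b\<in>B. f x b \<oplus> (\<Oplus>a\<in>F. f a b))"
    using insert by (subst finsum_addf) (auto intro!: finsum_closed)
  also have "\<dots> = (\<Oplus>b\<in>B. \<Oplus>a\<in>insert x F. f a b)"
    using insert by (intro finsum_cong') (auto intro!: finsum_closed)
  finally show ?case .
qed

context cring
begin

lemma mv_closed:
  assumes "\<And>j. j \<in> J \<Longrightarrow> M i j \<in> carrier R" "\<And>j. j \<in> J \<Longrightarrow> w j \<in> carrier R"
  shows "mv R M J w i \<in> carrier R"
  unfolding mv_def using assms by (intro finsum_closed) auto

lemma mv_cong:
  assumes "\<And>j. j \<in> J \<Longrightarrow> w1 j = w2 j" "\<And>j. j \<in> J \<Longrightarrow> M i j \<in> carrier R" "\<And>j. j \<in> J \<Longrightarrow> w2 j \<in> carrier R"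
  shows "mv R M J w1 i = mv R M J w2 i"
  unfolding mv_def using assms by (intro finsum_cong') auto

lemma mv_add:
  assumes "\<And>j. j \<in> J \<Longrightarrow> M i j \<in> carrier R" "\<And>j. j \<in> J \<Longrightarrow> w1 j \<in> carrier R"
     "\<And>j. j \<in> J \<Longrightarrow> w2 j \<in> carrier R"
  shows "mv R M J (\<lambda>j. w1 j \<oplus> w2 j) i = mv R M J w1 i \<oplus> mv R M J w2 i"
proof -
  have "mv R M J (\<lambda>j. w1 j \<oplus> w2 j) i = (\<Oplus>j\<in>J. M i j \<otimes> w1 j \<oplus> M i j \<otimes> w2 j)"
    unfolding mv_def using assms by (intro finsum_cong') (auto simp: r_distr)
  also have "\<dots> = mv R M J w1 i \<oplus> mv R M J w2 i"
    unfolding mv_def using assms by (subst finsum_addf) auto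
  finally show ?thesis .
qed

lemma mv_smult:
  assumes "\<And>j. j \<in> J \<Longrightarrow> M i j \<in> carrier R" "\<And>j. j \<in> J \<Longrightarrow> w j \<in> carrier R" "c \<in> carrier R"
  shows "mv R M J (\<lambda>j. c \<otimes> w j) i = c \<otimes> mv R M J w i"
proof -
  have "mv R M J (\<lambda>j. c \<otimes> w j) i = (\<Oplus>j\<in>J. c \<otimes> (M i j \<otimes> w j))"
    unfolding mv_def using assms by (intro finsum_cong') (auto simp: m_lcomm)
  also have "\<dots> = c \<otimes> mv R M J w i"
    unfolding mv_def using assms
    by (cases "finite J") (auto simp: finsum_rdistr finsum_infinite)
  finally show ?thesis .
qed

lemma mv_minus:
  assumes "\<And>j. j \<in> J \<Longrightarrow> M i j \<in> carrier R" "\<And>j. j \<in> J \<Longrightarrow> w1 j \<in> carrier R"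
     "\<And>j. j \<in> J \<Longrightarrow> w2 j \<in> carrier R"
  shows "mv R M J (\<lambda>j. w1 j \<ominus> w2 j) i = mv R M J w1 i \<ominus> mv R M J w2 i"
proof -
  have "mv R M J (\<lambda>j. w1 j \<ominus> w2 j) i = mv R M J (\<lambda>j. w1 j \<oplus> (\<ominus>\<one>) \<otimes> w2 j) i"
    using assms by (intro mv_cong) (auto simp: minus_eq l_minus)
  also have "\<dots> = mv R M J w1 i \<oplus> (\<ominus>\<one>) \<otimes> mv R M J w2 i"
    using assms by (simp add: mv_add mv_smult)
  also have "\<dots> = mv R M J w1 i \<ominus> mv R M J w2 i"
    using assms by (simp add: minus_eq l_minus mv_closed)
  finally show ?thesis .
qed

lemma mv_matadd:
  assumes "\<And>j. j \<in> J \<Longrightarrow> M i j \<in> carrier R" "\<And>j. j \<in> J \<Longrightarrow> E i j \<in> carrier R"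
    "\<And>j. j \<in> J \<Longrightarrow> w j \<in> carrier R" "\<rho> \<in> carrier R"
  shows "mv R (\<lambda>i j. M i j \<oplus> \<rho> \<otimes> E i j) J w i = mv R M J w i \<oplus> \<rho> \<otimes> mv R E J w i"
proof -
  have "mv R (\<lambda>i j. M i j \<oplus> \<rho> \<otimes> E i j) J w i = (\<Oplus>j\<in>J. M i j \<otimes> w j \<oplus> \<rho> \<otimes> (E i j \<otimes> w j))"
    unfolding mv_def using assms by (intro finsum_cong') (auto simp: l_distr m_assoc)
  also have "\<dots> = mv R M J w i \<oplus> \<rho> \<otimes> mv R E J w i"
    unfolding mv_def using assms
    by (cases "finite J") (auto simp: finsum_addf finsum_rdistr finsum_infinite)
  finally show ?thesis .
qed

lemma mv_lincomb:
  assumes "finite J" "finite P" "\<And>j. j \<in> J \<Longrightarrow> M i j \<in> carrier R"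
    "\<And>p j. p \<in> P \<Longrightarrow> j \<in> J \<Longrightarrow> W p j \<in> carrier R" "\<And>p. p \<in> P \<Longrightarrow> c p \<in> carrier R"
  shows "mv R M J (\<lambda>j. \<Oplus>p\<in>P. c p \<otimes> W p j) i = (\<Oplus>p\<in>P. c p \<otimes> mv R M J (W p) i)"
proof -
  have "mv R M J (\<lambda>j. \<Oplus>p\<in>P. c p \<otimes> W p j) i = (\<Oplus>j\<in>J. \<Oplus>p\<in>P. c p \<otimes> (M i j \<otimes> W p j))"
    unfolding mv_def using assms
    by (intro finsum_cong') (auto simp: finsum_rdistr m_lcomm Pi_def intro!: finsum_cong')
  also have "\<dots> = (\<Oplus>p\<in>P. \<Oplus>j\<in>J. c p \<otimes> (M i j \<otimes> W p j))"
    using assms by (intro finsum_swap) auto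
  also have "\<dots> = (\<Oplus>p\<in>P. c p \<otimes> mv R M J (W p) i)"
    unfolding mv_def using assms
    by (intro finsum_cong') (auto simp: finsum_rdistr)
  finally show ?thesis .
qed


lemma finsum_diff:
  assumes "f \<in> A \<rightarrow> carrier R" "g \<in> A \<rightarrow> carrier R"
  shows "(\<Oplus>x\<in>A. f x \<ominus> g x) = (\<Oplus>x\<in>A. f x) \<ominus> (\<Oplus>x\<in>A. g x)"
proof (cases "finite A")
  case True
  have "(\<Oplus>x\<in>A. f x \<ominus> g x) = (\<Oplus>x\<in>A. f x \<oplus> (\<ominus>\<one>) \<otimes> g x)"
    using assms by (intro finsum_cong') (auto simp: minus_eq l_minus Pi_iff)
  also have "\<dots> = (\<Oplus>x\<in>A. f x) \<oplus> (\<ominus>\<one>) \<otimes> (\<Oplus>x\<in>A. g x)"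
    using assms True by (simp add: finsum_addf finsum_rdistr Pi_def)
  also have "\<dots> = (\<Oplus>x\<in>A. f x) \<ominus> (\<Oplus>x\<in>A. g x)"
    using assms by (simp add: minus_eq l_minus finsum_closed)
  finally show ?thesis .
qed (simp add: finsum_infinite minus_eq)

lemma minus_eq_zero_iff:
  assumes "a \<in> carrier R" "b \<in> carrier R"
  shows "a \<ominus> b = \<zero> \<longleftrightarrow> a = b"
proof
  assume "a \<ominus> b = \<zero>"
  then have "a \<ominus> b \<oplus> b = b" using assms by simp
  moreover have "a \<ominus> b \<oplus> b = a" using assms by algebra
  ultimately show "a = b" by simp
next
  assume "a = b" then show "a \<ominus> b = \<zero>" using assms by (simp add: minus_eq r_neg)
qed

lemma diff_mult_distr:
  assumes "a \<in> carrier R" "b \<in> carrier R" "c \<in> carrier R"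
  shows "(a \<ominus> b) \<otimes> c = a \<otimes> c \<ominus> b \<otimes> c"
  using assms by algebra

lemma mv_zero:
  assumes "\<And>j. j \<in> J \<Longrightarrow> M i j \<in> carrier R" "\<And>j. j \<in> J \<Longrightarrow> w j = \<zero>"
  shows "mv R M J w i = \<zero>"
  unfolding mv_def using assms by (intro add.finprod_one_eqI) auto

end

context field
begin

lemma inj_surj:
  assumes fin: "finite (carrier R)" "finite I" "finite J" "card I = card J"
    and M: "\<And>i j. i \<in> I \<Longrightarrow> j \<in> J \<Longrightarrow> M i j \<in> carrier R"
    and inj: "\<And>w. w \<in> J \<rightarrow> carrier R \<Longrightarrow> (\<forall>i\<in>I. mv R M J w i = \<zero>) \<Longrightarrow> \<forall>j\<in>J. w j = \<zero>"
    and u: "u \<in> I \<rightarrow> carrier R"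
  shows "\<exists>w\<in>J \<rightarrow>\<^sub>E carrier R. \<forall>i\<in>I. mv R M J w i = u i"
proof -
  define f where "f = (\<lambda>w. restrict (\<lambda>i. mv R M J w i) I)"
  have fim: "f ` (J \<rightarrow>\<^sub>E carrier R) \<subseteq> I \<rightarrow>\<^sub>E carrier R"
    unfolding f_def using M by (auto intro!: mv_closed)
  have finj: "inj_on f (J \<rightarrow>\<^sub>E carrier R)"
  proof (rule inj_onI)
    fix w1 w2 assume w: "w1 \<in> J \<rightarrow>\<^sub>E carrier R" "w2 \<in> J \<rightarrow>\<^sub>E carrier R" "f w1 = f w2"
    have "\<forall>i\<in>I. mv R M J w1 i = mv R M J w2 i"
      using w(3) unfolding f_def by (metis restrict_apply')
    then have "\<forall>i\<in>I. mv R M J (\<lambda>j. w1 j \<ominus> w2 j) i = \<zero>"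
    proof (intro ballI)
      fix i assume "i \<in> I" "\<forall>i\<in>I. mv R M J w1 i = mv R M J w2 i"
      then show "mv R M J (\<lambda>j. w1 j \<ominus> w2 j) i = \<zero>"
      proof -
        have "mv R M J w2 i \<in> carrier R" using w M \<open>i \<in> I\<close> by (intro mv_closed) auto
        then show ?thesis using w M \<open>i \<in> I\<close> \<open>\<forall>i\<in>I. mv R M J w1 i = mv R M J w2 i\<close>
          by (subst mv_minus) (auto simp: minus_eq r_neg)
      qed
    qed
    moreover have "(\<lambda>j. w1 j \<ominus> w2 j) \<in> J \<rightarrow> carrier R"
      using w by (auto simp: PiE_iff)
    ultimately have z: "\<forall>j\<in>J. w1 j \<ominus> w2 j = \<zero>"
      using inj[of "\<lambda>j. w1 j \<ominus> w2 j"] by blast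
    have "\<forall>j\<in>J. w1 j = w2 j"
    proof
      fix j assume "j \<in> J"
      then have "w1 j \<in> carrier R" "w2 j \<in> carrier R" using w by (auto simp: PiE_iff)
      then show "w1 j = w2 j" using z \<open>j \<in> J\<close> minus_eq_zero_iff by blast
    qed
    then show "w1 = w2" using w by (metis PiE_ext)
  qed
  have "card (f ` (J \<rightarrow>\<^sub>E carrier R)) = card (J \<rightarrow>\<^sub>E carrier R)"
    using card_image[OF finj] .
  also have "\<dots> = card (carrier R) ^ card J" using fin by (simp add: card_PiE)
  also have "\<dots> = card (I \<rightarrow>\<^sub>E carrier R)" using fin by (simp add: card_PiE)
  finally have "f ` (J \<rightarrow>\<^sub>E carrier R) = I \<rightarrow>\<^sub>E carrier R"
    using fim fin by (intro card_subset_eq) (auto intro: finite_PiE)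
  moreover have "restrict u I \<in> I \<rightarrow>\<^sub>E carrier R" using u by auto
  ultimately obtain w where "w \<in> J \<rightarrow>\<^sub>E carrier R" "f w = restrict u I" by (metis imageE)
  then show ?thesis unfolding f_def by (metis restrict_apply')
qed


lemma nonzero_inv:
  assumes "x \<in> carrier R" "x \<noteq> \<zero>"
  shows "inv x \<in> carrier R" "inv x \<otimes> x = \<one>" "x \<otimes> inv x = \<one>" "inv x \<noteq> \<zero>"
  using assms field_Units by auto

lemma bad_card:
  assumes fin: "finite (carrier R)" "finite I" "finite J"
    and M: "\<And>i j. i \<in> I \<Longrightarrow> j \<in> J \<Longrightarrow> M i j \<in> carrier R"
    and E: "\<And>i j. i \<in> I \<Longrightarrow> j \<in> J \<Longrightarrow> E i j \<in> carrier R"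
    and inj: "\<And>w. w \<in> J \<rightarrow> carrier R \<Longrightarrow> (\<forall>i\<in>I. mv R M J w i = \<zero>) \<Longrightarrow> \<forall>j\<in>J. w j = \<zero>"
  shows "card {\<rho>\<in>carrier R - {\<zero>}. \<exists>w\<in>J \<rightarrow> carrier R. (\<exists>j\<in>J. w j \<noteq> \<zero>) \<and>
            (\<forall>i\<in>I. mv R (\<lambda>i j. M i j \<oplus> \<rho> \<otimes> E i j) J w i = \<zero>)} \<le> card J"
    (is "card ?B \<le> _")
proof -
  have "\<forall>\<rho>\<in>?B. \<exists>w. w \<in> J \<rightarrow> carrier R \<and> (\<exists>j\<in>J. w j \<noteq> \<zero>) \<and>
            (\<forall>i\<in>I. mv R (\<lambda>i j. M i j \<oplus> \<rho> \<otimes> E i j) J w i = \<zero>)" by blast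
  from bchoice[OF this] obtain W where W0: "\<forall>\<rho>\<in>?B. W \<rho> \<in> J \<rightarrow> carrier R \<and> (\<exists>j\<in>J. W \<rho> j \<noteq> \<zero>) \<and>
            (\<forall>i\<in>I. mv R (\<lambda>i j. M i j \<oplus> \<rho> \<otimes> E i j) J (W \<rho>) i = \<zero>)"
    by blast
  note W = bspec[OF W0]
  have Wc: "W \<rho> j \<in> carrier R" if "\<rho> \<in> ?B" "j \<in> J" for \<rho> j using W[OF that(1)] that(2) by auto
  have finB: "finite ?B" using fin(1) by (rule finite_subset[rotated]) auto
  have Bc: "\<rho> \<in> carrier R" "\<rho> \<noteq> \<zero>" if "\<rho> \<in> ?B" for \<rho> using that by auto
  \<comment> \<open>eigen relation\<close>
  have eig: "inv \<rho> \<otimes> mv R M J (W \<rho>) i = \<ominus> mv R E J (W \<rho>) i" if "\<rho> \<in> ?B" "i \<in> I" for \<rho> i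
  proof -
    have m: "mv R M J (W \<rho>) i \<in> carrier R" and e: "mv R E J (W \<rho>) i \<in> carrier R"
      using that M E Wc[OF that(1)] by (auto intro!: mv_closed)
    have "mv R (\<lambda>i j. M i j \<oplus> \<rho> \<otimes> E i j) J (W \<rho>) i = mv R M J (W \<rho>) i \<oplus> \<rho> \<otimes> mv R E J (W \<rho>) i"
      using that M E Wc[OF that(1)] Bc[OF that(1)] by (intro mv_matadd) auto
    then have "mv R M J (W \<rho>) i \<oplus> \<rho> \<otimes> mv R E J (W \<rho>) i = \<zero>"
      using W[OF that(1)] that(2) by simp
    then have "inv \<rho> \<otimes> (mv R M J (W \<rho>) i \<oplus> \<rho> \<otimes> mv R E J (W \<rho>) i) = \<zero>"
      using nonzero_inv Bc[OF that(1)] by simp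
    moreover have h: "inv \<rho> \<otimes> (\<rho> \<otimes> mv R E J (W \<rho>) i) = mv R E J (W \<rho>) i"
    proof -
      have "inv \<rho> \<otimes> (\<rho> \<otimes> mv R E J (W \<rho>) i) = (inv \<rho> \<otimes> \<rho>) \<otimes> mv R E J (W \<rho>) i"
        using nonzero_inv[of \<rho>] Bc[OF that(1)] m e by (intro m_assoc[symmetric]) auto
      then show ?thesis using nonzero_inv[of \<rho>] Bc[OF that(1)] m e by simp
    qed
    ultimately have "inv \<rho> \<otimes> mv R M J (W \<rho>) i \<oplus> mv R E J (W \<rho>) i = \<zero>"
      using nonzero_inv[of \<rho>] Bc[OF that(1)] m e by (simp add: r_distr)
    then have "\<ominus> mv R E J (W \<rho>) i = inv \<rho> \<otimes> mv R M J (W \<rho>) i"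
      using nonzero_inv[of \<rho>] Bc[OF that(1)] m e by (intro add.inv_equality) auto
    then show ?thesis by simp
  qed
  have indep: "\<forall>c. c \<in> P \<rightarrow> carrier R \<longrightarrow> (\<forall>j\<in>J. (\<Oplus>\<rho>\<in>P. c \<rho> \<otimes> W \<rho> j) = \<zero>) \<longrightarrow> (\<forall>\<rho>\<in>P. c \<rho> = \<zero>)"
    if "P \<subseteq> ?B" for P
  proof -
    have "finite P" using finB that by (rule finite_subset[rotated])
    then show ?thesis using that
    proof (induction P rule: finite_induct)
      case empty
      then show ?case by simp
    next
      case (insert p P)
      let ?P1 = "insert p P"
      have pB: "p \<in> ?B" and PB: "P \<subseteq> ?B" using insert.prems by auto
      show ?case
      proof (intro allI impI)
        fix c assume c: "c \<in> ?P1 \<rightarrow> carrier R"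
          and z: "\<forall>j\<in>J. (\<Oplus>\<rho>\<in>?P1. c \<rho> \<otimes> W \<rho> j) = \<zero>"
        have cc: "c \<rho> \<in> carrier R" if "\<rho> \<in> ?P1" for \<rho> using c that by auto
        have P1B: "\<rho> \<in> ?B" if "\<rho> \<in> ?P1" for \<rho> using that insert.prems by auto
        have finP1: "finite ?P1" using insert.hyps by simp
        have ip: "inv p \<in> carrier R" using nonzero_inv Bc[OF pB] by simp
        define c' where "c' \<rho> = c \<rho> \<otimes> (inv \<rho> \<ominus> inv p)" for \<rho>
        have c'c: "c' \<rho> \<in> carrier R" if "\<rho> \<in> ?P1" for \<rho>
          unfolding c'_def using cc[OF that] nonzero_inv Bc[OF P1B[OF that]] ip by simp
        have Msum: "(\<Oplus>\<rho>\<in>?P1. c \<rho> \<otimes> mv R M J (W \<rho>) i) = \<zero>" if "i \<in> I" for i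
        proof -
          have "(\<Oplus>\<rho>\<in>?P1. c \<rho> \<otimes> mv R M J (W \<rho>) i) = mv R M J (\<lambda>j. \<Oplus>\<rho>\<in>?P1. c \<rho> \<otimes> W \<rho> j) i"
            using fin finP1 M that Wc P1B cc by (intro mv_lincomb[symmetric]) auto
          also have "\<dots> = \<zero>" using z M that by (intro mv_zero) auto
          finally show ?thesis .
        qed
        have Esum: "(\<Oplus>\<rho>\<in>?P1. c \<rho> \<otimes> mv R E J (W \<rho>) i) = \<zero>" if "i \<in> I" for i
        proof -
          have "(\<Oplus>\<rho>\<in>?P1. c \<rho> \<otimes> mv R E J (W \<rho>) i) = mv R E J (\<lambda>j. \<Oplus>\<rho>\<in>?P1. c \<rho> \<otimes> W \<rho> j) i"
            using fin finP1 E that Wc P1B cc by (intro mv_lincomb[symmetric]) auto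
          also have "\<dots> = \<zero>" using z E that by (intro mv_zero) auto
          finally show ?thesis .
        qed
        have mc: "mv R M J (W \<rho>) i \<in> carrier R" "mv R E J (W \<rho>) i \<in> carrier R"
          if "\<rho> \<in> ?B" "i \<in> I" for \<rho> i
          using that M E Wc[OF that(1)] by (auto intro!: mv_closed)
        define z' where "z' j = (\<Oplus>\<rho>\<in>?P1. c' \<rho> \<otimes> W \<rho> j)" for j
        have z'c: "z' \<in> J \<rightarrow> carrier R"
          unfolding z'_def using c'c Wc P1B by (auto intro!: finsum_closed)
        have "\<forall>i\<in>I. mv R M J z' i = \<zero>"
        proof
          fix i assume i: "i \<in> I"
          have "mv R M J z' i = (\<Oplus>\<rho>\<in>?P1. c' \<rho> \<otimes> mv R M J (W \<rho>) i)"
            unfolding z'_def using fin finP1 M i Wc P1B c'c by (intro mv_lincomb) auto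
          also have "\<dots> = (\<Oplus>\<rho>\<in>?P1. (\<ominus>\<one>) \<otimes> (c \<rho> \<otimes> mv R E J (W \<rho>) i) \<oplus>
                                       (\<ominus> (inv p)) \<otimes> (c \<rho> \<otimes> mv R M J (W \<rho>) i))"
          proof (intro finsum_cong')
            fix \<rho> assume r: "\<rho> \<in> ?P1"
            define m where "m = mv R M J (W \<rho>) i"
            define e where "e = mv R E J (W \<rho>) i"
            have mce: "m \<in> carrier R" "e \<in> carrier R" unfolding m_def e_def using mc P1B[OF r] i by auto
            have ir: "inv \<rho> \<in> carrier R" using nonzero_inv Bc[OF P1B[OF r]] by simp
            have ee: "e = \<ominus> (inv \<rho> \<otimes> m)"
              unfolding m_def e_def using eig[OF P1B[OF r] i] mce ir unfolding m_def e_def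
              by (simp add: add.inv_inv)
            show "c' \<rho> \<otimes> mv R M J (W \<rho>) i = (\<ominus>\<one>) \<otimes> (c \<rho> \<otimes> mv R E J (W \<rho>) i) \<oplus>
                                       (\<ominus> (inv p)) \<otimes> (c \<rho> \<otimes> mv R M J (W \<rho>) i)"
              unfolding m_def[symmetric] e_def[symmetric] ee c'_def
              using mce ir ip cc[OF r] by algebra
          qed (use c'c mc P1B i cc ip in auto)
          also have "\<dots> = (\<ominus>\<one>) \<otimes> (\<Oplus>\<rho>\<in>?P1. c \<rho> \<otimes> mv R E J (W \<rho>) i) \<oplus>
                           (\<ominus> (inv p)) \<otimes> (\<Oplus>\<rho>\<in>?P1. c \<rho> \<otimes> mv R M J (W \<rho>) i)"
            using finP1 mc P1B i cc ip by (simp add: finsum_addf finsum_rdistr Pi_def)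
          also have "\<dots> = \<zero>" using Msum[OF i] Esum[OF i] ip by simp
          finally show "mv R M J z' i = \<zero>" .
        qed
        then have z'0: "\<forall>j\<in>J. z' j = \<zero>" using inj z'c by blast
        have c'p: "c' p = \<zero>" unfolding c'_def using ip cc[of p] by (simp add: minus_eq r_neg)
        have "\<forall>j\<in>J. (\<Oplus>\<rho>\<in>P. c' \<rho> \<otimes> W \<rho> j) = \<zero>"
        proof
          fix j assume j: "j \<in> J"
          have "z' j = c' p \<otimes> W p j \<oplus> (\<Oplus>\<rho>\<in>P. c' \<rho> \<otimes> W \<rho> j)"
            unfolding z'_def using insert.hyps c'c Wc P1B j by (subst finsum_insert) auto
          then show "(\<Oplus>\<rho>\<in>P. c' \<rho> \<otimes> W \<rho> j) = \<zero>"
            using z'0 j c'p Wc[OF pB j(1)] c'c Wc P1B by (simp add: finsum_closed Pi_def)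
        qed
        moreover have "c' \<in> P \<rightarrow> carrier R" using c'c by auto
        ultimately have c'0: "\<forall>\<rho>\<in>P. c' \<rho> = \<zero>" using insert.IH PB by blast
        have cP: "c \<rho> = \<zero>" if r: "\<rho> \<in> P" for \<rho>
        proof -
          have rB: "\<rho> \<in> ?B" using r PB by auto
          have "\<rho> \<noteq> p" using r insert.hyps by auto
          have "inv \<rho> \<noteq> inv p"
          proof
            assume "inv \<rho> = inv p"
            then have "inv (inv \<rho>) = inv (inv p)" by simp
            then show False using \<open>\<rho> \<noteq> p\<close> Bc[OF rB] Bc[OF pB] field_Units
              by (simp add: Units_inv_inv)
          qed
          then have "inv \<rho> \<ominus> inv p \<noteq> \<zero>"
            using minus_eq_zero_iff nonzero_inv Bc[OF rB] ip by simp
          moreover have "c \<rho> \<otimes> (inv \<rho> \<ominus> inv p) = \<zero>" using c'0 r unfolding c'_def by auto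
          ultimately show ?thesis
            using integral cc r nonzero_inv Bc[OF rB] ip by (meson insertCI minus_closed)
        qed
        have cp: "c p = \<zero>"
        proof -
          obtain j where j: "j \<in> J" "W p j \<noteq> \<zero>" using W[OF pB] by blast
          have "(\<Oplus>\<rho>\<in>P. c \<rho> \<otimes> W \<rho> j) = \<zero>"
          proof (intro add.finprod_one_eqI)
            fix x assume x: "x \<in> P"
            have "W x j \<in> carrier R" using Wc[OF subsetD[OF PB x] j(1)] .
            then show "c x \<otimes> W x j = \<zero>" using cP x by simp
          qed
          moreover have "(\<Oplus>\<rho>\<in>?P1. c \<rho> \<otimes> W \<rho> j) = c p \<otimes> W p j \<oplus> (\<Oplus>\<rho>\<in>P. c \<rho> \<otimes> W \<rho> j)"
            using insert.hyps cc Wc P1B j by (subst finsum_insert) auto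
          moreover have "(\<Oplus>\<rho>\<in>?P1. c \<rho> \<otimes> W \<rho> j) = \<zero>" using z j(1) by blast
          ultimately have "c p \<otimes> W p j \<oplus> \<zero> = \<zero>" by simp
          moreover have cpc: "c p \<in> carrier R" using cc by blast
          ultimately have "c p \<otimes> W p j = \<zero>" using Wc[OF pB j(1)] by simp
          then show ?thesis using integral[OF _ cpc Wc[OF pB j(1)]] j(2) by blast
        qed
        show "\<forall>\<rho>\<in>?P1. c \<rho> = \<zero>" using cP cp by auto
      qed
    qed
  qed
  define L where "L c = restrict (\<lambda>j. \<Oplus>\<rho>\<in>?B. c \<rho> \<otimes> W \<rho> j) J" for c
  have Lim: "L ` (?B \<rightarrow>\<^sub>E carrier R) \<subseteq> J \<rightarrow>\<^sub>E carrier R"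
  proof
    fix y assume "y \<in> L ` (?B \<rightarrow>\<^sub>E carrier R)"
    then obtain c where c: "c \<in> ?B \<rightarrow>\<^sub>E carrier R" "y = L c" by blast
    have "(\<Oplus>\<rho>\<in>?B. c \<rho> \<otimes> W \<rho> j) \<in> carrier R" if "j \<in> J" for j
    proof (intro finsum_closed)
      show "(\<lambda>\<rho>. c \<rho> \<otimes> W \<rho> j) \<in> ?B \<rightarrow> carrier R"
      proof
        fix \<rho> assume r: "\<rho> \<in> ?B"
        have "c \<rho> \<in> carrier R" using c(1) r by (auto simp: PiE_iff)
        then show "c \<rho> \<otimes> W \<rho> j \<in> carrier R" using Wc[OF r that] by simp
      qed
    qed
    then show "y \<in> J \<rightarrow>\<^sub>E carrier R" unfolding c(2) L_def by auto
  qed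
  have Linj: "inj_on L (?B \<rightarrow>\<^sub>E carrier R)"
  proof (rule inj_onI)
    fix c1 c2 assume c1: "c1 \<in> ?B \<rightarrow>\<^sub>E carrier R" and c2: "c2 \<in> ?B \<rightarrow>\<^sub>E carrier R"
      and eq: "L c1 = L c2"
    have c1c: "c1 \<rho> \<in> carrier R" and c2c: "c2 \<rho> \<in> carrier R" if "\<rho> \<in> ?B" for \<rho>
      using c1 c2 that by (auto simp: PiE_iff)
    have Z: "\<forall>j\<in>J. (\<Oplus>\<rho>\<in>?B. (c1 \<rho> \<ominus> c2 \<rho>) \<otimes> W \<rho> j) = \<zero>"
    proof
      fix j assume j: "j \<in> J"
      have f1: "(\<lambda>\<rho>. c1 \<rho> \<otimes> W \<rho> j) \<in> ?B \<rightarrow> carrier R"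
        by (rule funcsetI) (intro m_closed c1c Wc j, assumption+)
      have f2: "(\<lambda>\<rho>. c2 \<rho> \<otimes> W \<rho> j) \<in> ?B \<rightarrow> carrier R"
        by (rule funcsetI) (intro m_closed c2c Wc j, assumption+)
      have f3: "(\<lambda>\<rho>. c1 \<rho> \<otimes> W \<rho> j \<ominus> c2 \<rho> \<otimes> W \<rho> j) \<in> ?B \<rightarrow> carrier R"
        by (rule funcsetI) (intro minus_closed m_closed c1c c2c Wc j, assumption+)
      have "(\<Oplus>\<rho>\<in>?B. c1 \<rho> \<otimes> W \<rho> j) = (\<Oplus>\<rho>\<in>?B. c2 \<rho> \<otimes> W \<rho> j)"
        using fun_cong[OF eq, of j] j unfolding L_def by simp
      moreover have "(\<Oplus>\<rho>\<in>?B. (c1 \<rho> \<ominus> c2 \<rho>) \<otimes> W \<rho> j) =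
          (\<Oplus>\<rho>\<in>?B. c1 \<rho> \<otimes> W \<rho> j \<ominus> c2 \<rho> \<otimes> W \<rho> j)"
      proof (intro finsum_cong')
        fix \<rho> assume r: "\<rho> \<in> ?B"
        show "(c1 \<rho> \<ominus> c2 \<rho>) \<otimes> W \<rho> j = c1 \<rho> \<otimes> W \<rho> j \<ominus> c2 \<rho> \<otimes> W \<rho> j"
          by (rule diff_mult_distr[OF c1c[OF r] c2c[OF r] Wc[OF r j]])
      qed (rule refl, rule f3)
      moreover have "(\<Oplus>\<rho>\<in>?B. c1 \<rho> \<otimes> W \<rho> j \<ominus> c2 \<rho> \<otimes> W \<rho> j) =
          (\<Oplus>\<rho>\<in>?B. c1 \<rho> \<otimes> W \<rho> j) \<ominus> (\<Oplus>\<rho>\<in>?B. c2 \<rho> \<otimes> W \<rho> j)"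
        by (intro finsum_diff f1 f2)
      moreover have "(\<Oplus>\<rho>\<in>?B. c2 \<rho> \<otimes> W \<rho> j) \<in> carrier R"
        by (intro finsum_closed f2)
      ultimately show "(\<Oplus>\<rho>\<in>?B. (c1 \<rho> \<ominus> c2 \<rho>) \<otimes> W \<rho> j) = \<zero>"
        by (simp add: minus_eq r_neg)
    qed
    have H: "(\<lambda>\<rho>. c1 \<rho> \<ominus> c2 \<rho>) \<in> ?B \<rightarrow> carrier R"
      by (rule funcsetI) (intro minus_closed c1c c2c, assumption+)
    have D: "\<forall>\<rho>\<in>?B. c1 \<rho> \<ominus> c2 \<rho> = \<zero>"
      using mp[OF mp[OF spec[OF indep[OF subset_refl], of "\<lambda>\<rho>. c1 \<rho> \<ominus> c2 \<rho>"] H] Z] .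
    have Eq: "\<forall>\<rho>\<in>?B. c1 \<rho> = c2 \<rho>"
    proof
      fix \<rho> assume r: "\<rho> \<in> ?B"
      show "c1 \<rho> = c2 \<rho>" using minus_eq_zero_iff[OF c1c[OF r] c2c[OF r]] bspec[OF D r] by simp
    qed
    show "c1 = c2" by (rule PiE_ext[OF c1 c2], rule bspec[OF Eq])
  qed
  have "card (?B \<rightarrow>\<^sub>E carrier R) \<le> card (J \<rightarrow>\<^sub>E carrier R)"
    using card_inj_on_le[OF Linj Lim] fin by (simp add: finite_PiE)
  then have le: "card (carrier R) ^ card ?B \<le> card (carrier R) ^ card J"
    using fin finB by (simp add: card_PiE)
  have "{\<zero>, \<one>} \<subseteq> carrier R" by auto
  then have "card {\<zero>, \<one>} \<le> card (carrier R)" using fin(1) by (rule card_mono[rotated])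
  moreover have "card {\<zero>, \<one>} = 2" using zero_not_one by simp
  ultimately have "1 < card (carrier R)" by simp
  then show ?thesis using le by (rule power_le_imp_le_exp)
qed


lemma cauchy_identity:
  assumes c: "ai \<in> carrier R" "bj \<in> carrier R" "bm \<in> carrier R" "aim \<in> carrier R" "w \<in> carrier R"
    "X \<in> carrier R" "Y \<in> carrier R"
    and h1: "(ai \<ominus> bj) \<otimes> X = \<one>" and h2: "(aim \<ominus> bj) \<otimes> Y = \<one>"
  shows "X \<otimes> (w \<otimes> (bj \<ominus> bm) \<otimes> Y) \<otimes> (aim \<ominus> ai) =
         (ai \<ominus> bm) \<otimes> (X \<otimes> w) \<ominus> (aim \<ominus> bm) \<otimes> (Y \<otimes> w)"
proof -
  have "X \<otimes> (w \<otimes> (bj \<ominus> bm) \<otimes> Y) \<otimes> (aim \<ominus> ai) =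
        w \<otimes> (bj \<ominus> bm) \<otimes> X \<otimes> ((aim \<ominus> bj) \<otimes> Y) \<ominus> w \<otimes> (bj \<ominus> bm) \<otimes> Y \<otimes> ((ai \<ominus> bj) \<otimes> X)"
    using c by algebra
  also have "\<dots> = w \<otimes> (bj \<ominus> bm) \<otimes> X \<otimes> \<one> \<ominus> w \<otimes> (bj \<ominus> bm) \<otimes> Y \<otimes> \<one>"
    by (simp only: h1 h2)
  also have "\<dots> = \<one> \<otimes> w \<oplus> (bj \<ominus> bm) \<otimes> X \<otimes> w \<ominus> (\<one> \<otimes> w \<oplus> (bj \<ominus> bm) \<otimes> Y \<otimes> w)"
    using c by algebra
  also have "\<dots> = ((ai \<ominus> bj) \<otimes> X) \<otimes> w \<oplus> (bj \<ominus> bm) \<otimes> X \<otimes> w \<ominus> (((aim \<ominus> bj) \<otimes> Y) \<otimes> w \<oplus> (bj \<ominus> bm) \<otimes> Y \<otimes> w)"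
    by (simp only: h1 h2)
  also have "\<dots> = (ai \<ominus> bm) \<otimes> (X \<otimes> w) \<ominus> (aim \<ominus> bm) \<otimes> (Y \<otimes> w)"
    using c by algebra
  finally show ?thesis .
qed

end


context field begin

lemma diff_nonzero:
  assumes "x \<in> carrier R" "y \<in> carrier R" "x \<noteq> y"
  shows "x \<ominus> y \<noteq> \<zero>"
  using minus_eq_zero_iff assms by blast

lemma cauchy_inj:
  assumes "finite J"
  shows "\<And>I w. finite I \<Longrightarrow> card I = card J \<Longrightarrow> a ` I \<subseteq> carrier R \<Longrightarrow> b ` J \<subseteq> carrier R \<Longrightarrow>
     inj_on a I \<Longrightarrow> inj_on b J \<Longrightarrow> a ` I \<inter> b ` J = {} \<Longrightarrow> w \<in> J \<rightarrow> carrier R \<Longrightarrow>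
     \<forall>i\<in>I. (\<Oplus>j\<in>J. inv (a i \<ominus> b j) \<otimes> w j) = \<zero> \<Longrightarrow> \<forall>j\<in>J. w j = \<zero>"
  using assms
proof (induction J rule: finite_induct)
  case empty
  then show ?case by simp
next
  case (insert m J)
  let ?J1 = "insert m J"
  from insert.prems have "card I = Suc (card J)" using insert.hyps by simp
  then obtain im where im: "im \<in> I" by (metis card.empty ex_in_conv nat.distinct(1))
  define I' where "I' = I - {im}"
  have cardI': "card I' = card J" unfolding I'_def using insert.prems(1) \<open>card I = Suc (card J)\<close> im by simp
  have ac: "a i \<in> carrier R" if "i \<in> I" for i using insert.prems that by auto
  have bc: "b j \<in> carrier R" if "j \<in> ?J1" for j using insert.prems that by auto
  have wc: "w j \<in> carrier R" if "j \<in> ?J1" for j using insert.prems(8) that by auto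
  have ab: "a i \<noteq> b j" if "i \<in> I" "j \<in> ?J1" for i j using insert.prems(7) that by blast
  have dnz: "a i \<ominus> b j \<noteq> \<zero>" if "i \<in> I" "j \<in> ?J1" for i j
    by (rule diff_nonzero[OF ac[OF that(1)] bc[OF that(2)] ab[OF that]])
  have dc: "a i \<ominus> b j \<in> carrier R" if "i \<in> I" "j \<in> ?J1" for i j using ac[OF that(1)] bc[OF that(2)] by simp
  have ic: "inv (a i \<ominus> b j) \<in> carrier R" and iinv: "(a i \<ominus> b j) \<otimes> inv (a i \<ominus> b j) = \<one>"
    and inz: "inv (a i \<ominus> b j) \<noteq> \<zero>"
    if "i \<in> I" "j \<in> ?J1" for i j using nonzero_inv[OF dc[OF that] dnz[OF that]] by auto
  have eq: "(\<Oplus>j\<in>?J1. inv (a i \<ominus> b j) \<otimes> w j) = \<zero>" if "i \<in> I" for i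
    using insert.prems(9) that by blast
  define u where "u j = w j \<otimes> (b j \<ominus> b m) \<otimes> inv (a im \<ominus> b j)" for j
  have uc: "u j \<in> carrier R" if "j \<in> ?J1" for j
    unfolding u_def using wc bc ic im that by simp
  have um: "u m = \<zero>" unfolding u_def using wc bc ic im by (simp add: minus_eq r_neg)
  have usum: "(\<Oplus>j\<in>J. inv (a i \<ominus> b j) \<otimes> u j) = \<zero>" if i: "i \<in> I'" for i
  proof -
    have iI: "i \<in> I" and ine: "i \<noteq> im" using i unfolding I'_def by auto
    have "(\<Oplus>j\<in>?J1. inv (a i \<ominus> b j) \<otimes> u j \<otimes> (a im \<ominus> a i)) =
          (\<Oplus>j\<in>?J1. (a i \<ominus> b m) \<otimes> (inv (a i \<ominus> b j) \<otimes> w j) \<ominus> (a im \<ominus> b m) \<otimes> (inv (a im \<ominus> b j) \<otimes> w j))"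
    proof (intro finsum_cong')
      fix j assume j: "j \<in> ?J1"
      show "inv (a i \<ominus> b j) \<otimes> u j \<otimes> (a im \<ominus> a i) =
          (a i \<ominus> b m) \<otimes> (inv (a i \<ominus> b j) \<otimes> w j) \<ominus> (a im \<ominus> b m) \<otimes> (inv (a im \<ominus> b j) \<otimes> w j)"
        unfolding u_def
        by (rule cauchy_identity[OF ac[OF iI] bc[OF j] bc ac[OF im] wc[OF j] ic[OF iI j] ic[OF im j]
              iinv[OF iI j] iinv[OF im j]]) simp
    next
      show "(\<lambda>j. (a i \<ominus> b m) \<otimes> (inv (a i \<ominus> b j) \<otimes> w j) \<ominus> (a im \<ominus> b m) \<otimes> (inv (a im \<ominus> b j) \<otimes> w j)) \<in> ?J1 \<rightarrow> carrier R"
        using ac[OF iI] ac[OF im] bc ic[OF iI] ic[OF im] wc by auto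
    qed simp
    also have "\<dots> = (a i \<ominus> b m) \<otimes> (\<Oplus>j\<in>?J1. inv (a i \<ominus> b j) \<otimes> w j) \<ominus> (a im \<ominus> b m) \<otimes> (\<Oplus>j\<in>?J1. inv (a im \<ominus> b j) \<otimes> w j)"
    proof -
      have f1: "(\<lambda>j. inv (a i \<ominus> b j) \<otimes> w j) \<in> ?J1 \<rightarrow> carrier R"
        using ic[OF iI] wc by auto
      have f2: "(\<lambda>j. inv (a im \<ominus> b j) \<otimes> w j) \<in> ?J1 \<rightarrow> carrier R"
        using ic[OF im] wc by auto
      have c1: "a i \<ominus> b m \<in> carrier R" "a im \<ominus> b m \<in> carrier R"
        using ac[OF iI] ac[OF im] bc by auto
      have fin1: "finite ?J1" using insert.hyps by simp
      show ?thesis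
        unfolding finsum_rdistr[OF fin1 c1(1) f1] finsum_rdistr[OF fin1 c1(2) f2]
        by (rule finsum_diff) (use f1 f2 c1 in auto)
    qed
    also have "\<dots> = \<zero>" using eq[OF iI] eq[OF im] ac[OF iI] ac[OF im] bc by (simp add: minus_eq)
    finally have s0: "(\<Oplus>j\<in>?J1. inv (a i \<ominus> b j) \<otimes> u j \<otimes> (a im \<ominus> a i)) = \<zero>" .
    have "(\<Oplus>j\<in>?J1. inv (a i \<ominus> b j) \<otimes> u j \<otimes> (a im \<ominus> a i)) =
          (\<Oplus>j\<in>?J1. inv (a i \<ominus> b j) \<otimes> u j) \<otimes> (a im \<ominus> a i)"
    proof -
      have fin1: "finite ?J1" using insert.hyps by simp
      have fc: "(\<lambda>j. inv (a i \<ominus> b j) \<otimes> u j) \<in> ?J1 \<rightarrow> carrier R" using ic[OF iI] uc by auto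
      have dc': "a im \<ominus> a i \<in> carrier R" using ac[OF iI] ac[OF im] by simp
      show ?thesis by (rule finsum_ldistr[OF fin1 dc' fc, symmetric])
    qed
    also have "(\<Oplus>j\<in>?J1. inv (a i \<ominus> b j) \<otimes> u j) = (\<Oplus>j\<in>J. inv (a i \<ominus> b j) \<otimes> u j)"
      using insert.hyps ic[OF iI] uc um by (subst finsum_insert) (auto simp: finsum_closed)
    finally have "(\<Oplus>j\<in>J. inv (a i \<ominus> b j) \<otimes> u j) \<otimes> (a im \<ominus> a i) = \<zero>" using s0 by simp
    moreover have "a im \<noteq> a i" using inj_onD[OF insert.prems(5) _ im iI] ine by auto
    then have nz: "a im \<ominus> a i \<noteq> \<zero>" by (rule diff_nonzero[OF ac[OF im] ac[OF iI]])
    moreover have Sc: "(\<Oplus>j\<in>J. inv (a i \<ominus> b j) \<otimes> u j) \<in> carrier R"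
      using ic[OF iI] uc by (auto intro!: finsum_closed)
    moreover have "a im \<ominus> a i \<in> carrier R" using ac[OF iI] ac[OF im] by simp
    ultimately show ?thesis using integral by blast
  qed
  have "\<forall>j\<in>J. u j = \<zero>"
  proof (rule insert.IH)
    show "finite I'" using insert.prems(1) unfolding I'_def by simp
    show "card I' = card J" by (rule cardI')
    show "a ` I' \<subseteq> carrier R" using insert.prems unfolding I'_def by auto
    show "b ` J \<subseteq> carrier R" using insert.prems by auto
    show "inj_on a I'" using insert.prems unfolding I'_def by (auto intro: inj_on_subset)
    show "inj_on b J" using insert.prems by (auto intro: inj_on_subset)
    show "a ` I' \<inter> b ` J = {}" using insert.prems unfolding I'_def by auto
    show "u \<in> J \<rightarrow> carrier R" using uc by auto
    show "\<forall>i\<in>I'. (\<Oplus>j\<in>J. inv (a i \<ominus> b j) \<otimes> u j) = \<zero>" using usum by auto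
  qed
  then have wJ: "w j = \<zero>" if j: "j \<in> J" for j
  proof -
    have jJ1: "j \<in> ?J1" and mJ1: "m \<in> ?J1" using j by auto
    have "u j = \<zero>" using \<open>\<forall>j\<in>J. u j = \<zero>\<close> j by blast
    then have u0: "(w j \<otimes> (b j \<ominus> b m)) \<otimes> inv (a im \<ominus> b j) = \<zero>" unfolding u_def .
    have "j \<noteq> m" using j insert.hyps by auto
    then have "b j \<noteq> b m" using inj_onD[OF insert.prems(6) _ jJ1 mJ1] by auto
    then have nz: "b j \<ominus> b m \<noteq> \<zero>" by (rule diff_nonzero[OF bc[OF jJ1] bc[OF mJ1]])
    have c1: "w j \<otimes> (b j \<ominus> b m) \<in> carrier R" using wc[OF jJ1] bc[OF jJ1] bc[OF mJ1] by simp
    have "w j \<otimes> (b j \<ominus> b m) = \<zero>"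
      using integral[OF u0 c1 ic[OF im jJ1]] inz[OF im jJ1] by blast
    then show ?thesis
      using integral[of "w j" "b j \<ominus> b m"] wc[OF jJ1] bc[OF jJ1] bc[OF mJ1] nz by auto
  qed
  have mJ1: "m \<in> ?J1" by simp
  have fc: "(\<lambda>j. inv (a im \<ominus> b j) \<otimes> w j) \<in> J \<rightarrow> carrier R" using ic[OF im] wc by auto
  have "(\<Oplus>j\<in>?J1. inv (a im \<ominus> b j) \<otimes> w j) = inv (a im \<ominus> b m) \<otimes> w m \<oplus> (\<Oplus>j\<in>J. inv (a im \<ominus> b j) \<otimes> w j)"
    using finsum_insert[OF insert.hyps fc] ic[OF im mJ1] wc[OF mJ1] by simp
  also have "(\<Oplus>j\<in>J. inv (a im \<ominus> b j) \<otimes> w j) = \<zero>"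
  proof (intro add.finprod_one_eqI)
    fix j assume j: "j \<in> J"
    then have "j \<in> ?J1" by simp
    then show "inv (a im \<ominus> b j) \<otimes> w j = \<zero>" using wJ[OF j] ic[OF im] by simp
  qed
  finally have "inv (a im \<ominus> b m) \<otimes> w m = \<zero>" using eq[OF im] ic[OF im mJ1] wc[OF mJ1] by simp
  then have "w m = \<zero>" using integral[OF _ ic[OF im mJ1] wc[OF mJ1]] inz[OF im mJ1] by blast
  then show ?case using wJ by auto
qed

end



locale mds_setup = field R for R :: "('f, 'm) ring_scheme" (structure) +
  fixes V :: "'v set" and Y :: "'y set" and Rw :: "'r set" and H :: "'r \<Rightarrow> 'v \<times> 'y \<Rightarrow> 'f"
    and n k :: nat and C :: "('v \<times> 'y \<Rightarrow> 'f) set"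
  assumes finR: "finite (carrier R)" and finV: "finite V" and finY: "finite Y" and Yne: "Y \<noteq> {}"
    and finRw: "finite Rw" and cardV: "card V = n" and k1: "1 \<le> k" and kn: "k \<le> n"
    and cardRw: "card Rw = (n - k) * card Y"
    and Hc: "\<And>row col. row \<in> Rw \<Longrightarrow> col \<in> V \<times> Y \<Longrightarrow> H row col \<in> carrier R"
    and good: "\<And>S w. S \<subseteq> V \<Longrightarrow> card S = n - k \<Longrightarrow> w \<in> S \<times> Y \<rightarrow> carrier R \<Longrightarrow>
        (\<forall>row\<in>Rw. mv R H (S \<times> Y) w row = \<zero>) \<Longrightarrow> \<forall>col\<in>S \<times> Y. w col = \<zero>"
    and C_def: "C = {c \<in> V \<times> Y \<rightarrow>\<^sub>E carrier R. \<forall>row\<in>Rw. mv R H (V \<times> Y) c row = \<zero>}"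
begin

definition zv where "zv = (\<lambda>i\<in>V \<times> Y. \<zero>)"
definition supp where "supp c = {v\<in>V. \<exists>y\<in>Y. c (v, y) \<noteq> \<zero>}"

lemma finVY: "finite (V \<times> Y)" using finV finY by simp

lemma C_mem: "c \<in> C \<longleftrightarrow> c \<in> V \<times> Y \<rightarrow>\<^sub>E carrier R \<and> (\<forall>row\<in>Rw. mv R H (V \<times> Y) c row = \<zero>)"
  using C_def by simp

lemma Cc: "c \<in> C \<Longrightarrow> i \<in> V \<times> Y \<Longrightarrow> c i \<in> carrier R"
  unfolding C_mem by (auto simp: PiE_iff)

lemma zv_C: "zv \<in> C"
  unfolding C_mem zv_def
proof (intro conjI ballI)
  fix row assume "row \<in> Rw"
  then show "mv R H (V \<times> Y) (\<lambda>i\<in>V \<times> Y. \<zero>) row = \<zero>" using Hc by (intro mv_zero) auto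
qed auto

lemma add_C:
  assumes "u \<in> C" "w \<in> C"
  shows "(\<lambda>i\<in>V \<times> Y. u i \<oplus> w i) \<in> C"
  unfolding C_mem
proof (intro conjI ballI)
  show "(\<lambda>i\<in>V \<times> Y. u i \<oplus> w i) \<in> V \<times> Y \<rightarrow>\<^sub>E carrier R" using Cc assms by auto
  fix row assume r: "row \<in> Rw"
  have "mv R H (V \<times> Y) (\<lambda>i\<in>V \<times> Y. u i \<oplus> w i) row = mv R H (V \<times> Y) (\<lambda>i. u i \<oplus> w i) row"
    using r Hc Cc assms by (intro mv_cong) auto
  also have "\<dots> = mv R H (V \<times> Y) u row \<oplus> mv R H (V \<times> Y) w row"
    using r Hc Cc assms by (intro mv_add) auto
  also have "\<dots> = \<zero>" using assms r unfolding C_mem by simp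
  finally show "mv R H (V \<times> Y) (\<lambda>i\<in>V \<times> Y. u i \<oplus> w i) row = \<zero>" .
qed

lemma diff_C:
  assumes "u \<in> C" "w \<in> C"
  shows "(\<lambda>i\<in>V \<times> Y. u i \<ominus> w i) \<in> C"
  unfolding C_mem
proof (intro conjI ballI)
  show "(\<lambda>i\<in>V \<times> Y. u i \<ominus> w i) \<in> V \<times> Y \<rightarrow>\<^sub>E carrier R" using Cc assms by auto
  fix row assume r: "row \<in> Rw"
  have "mv R H (V \<times> Y) (\<lambda>i\<in>V \<times> Y. u i \<ominus> w i) row = mv R H (V \<times> Y) (\<lambda>i. u i \<ominus> w i) row"
    using r Hc Cc assms by (intro mv_cong) auto
  also have "\<dots> = mv R H (V \<times> Y) u row \<ominus> mv R H (V \<times> Y) w row"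
    using r Hc Cc assms by (intro mv_minus) auto
  also have "\<dots> = \<zero>" using assms r unfolding C_mem by (simp add: minus_eq)
  finally show "mv R H (V \<times> Y) (\<lambda>i\<in>V \<times> Y. u i \<ominus> w i) row = \<zero>" .
qed

lemma smult_C:
  assumes "l \<in> carrier R" "u \<in> C"
  shows "(\<lambda>i\<in>V \<times> Y. l \<otimes> u i) \<in> C"
  unfolding C_mem
proof (intro conjI ballI)
  show "(\<lambda>i\<in>V \<times> Y. l \<otimes> u i) \<in> V \<times> Y \<rightarrow>\<^sub>E carrier R" using Cc assms by auto
  fix row assume r: "row \<in> Rw"
  have "mv R H (V \<times> Y) (\<lambda>i\<in>V \<times> Y. l \<otimes> u i) row = mv R H (V \<times> Y) (\<lambda>i. l \<otimes> u i) row"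
    using r Hc Cc assms by (intro mv_cong) auto
  also have "\<dots> = l \<otimes> mv R H (V \<times> Y) u row"
    using r Hc Cc assms by (intro mv_smult) auto
  also have "\<dots> = \<zero>" using assms r unfolding C_mem by simp
  finally show "mv R H (V \<times> Y) (\<lambda>i\<in>V \<times> Y. l \<otimes> u i) row = \<zero>" .
qed

lemma subspace: "lin_subspace R (V \<times> Y) C"
  unfolding lin_subspace_def using C_def zv_C add_C smult_C unfolding zv_def by auto

lemma small_supp_zero:
  assumes c: "c \<in> C" and sm: "card (supp c) \<le> n - k"
  shows "c = zv"
proof -
  have suppV: "supp c \<subseteq> V" unfolding supp_def by auto
  have fin: "finite (V - supp c)" using finV by simp
  have "card (V - supp c) = n - card (supp c)" using suppV finV cardV by (simp add: card_Diff_subset finite_subset)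
  then have "n - k - card (supp c) \<le> card (V - supp c)" by simp
  then obtain T where T: "T \<subseteq> V - supp c" "card T = n - k - card (supp c)"
    using obtain_subset_with_card_n by metis
  define S where "S = supp c \<union> T"
  have SV: "S \<subseteq> V" unfolding S_def using suppV T by auto
  have cardS: "card S = n - k"
  proof -
    have "finite (supp c)" using suppV finV finite_subset by blast
    moreover have "finite T" using T fin finite_subset by blast
    moreover have "supp c \<inter> T = {}" using T by auto
    ultimately show ?thesis unfolding S_def using T sm by (simp add: card_Un_disjoint)
  qed
  have zero_out: "c (v, y) = \<zero>" if "v \<in> V" "y \<in> Y" "v \<notin> S" for v y
    using that unfolding S_def supp_def by auto
  have "\<forall>row\<in>Rw. mv R H (S \<times> Y) c row = \<zero>"
  proof
    fix row assume r: "row \<in> Rw"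
    have "mv R H (S \<times> Y) c row = mv R H (V \<times> Y) c row"
      unfolding mv_def
    proof (rule add.finprod_mono_neutral_cong_left)
      show "finite (V \<times> Y)" by (rule finVY)
      show "S \<times> Y \<subseteq> V \<times> Y" using SV by auto
      fix i assume i: "i \<in> V \<times> Y - S \<times> Y"
      then obtain v y where vy: "i = (v, y)" "v \<in> V" "y \<in> Y" "v \<notin> S" by auto
      have "H row i \<in> carrier R" using Hc r i by auto
      then show "H row i \<otimes> c i = \<zero>" using zero_out[OF vy(2-4)] vy(1) by simp
    next
      show "(\<lambda>i. H row i \<otimes> c i) \<in> V \<times> Y \<rightarrow> carrier R" using Hc r Cc[OF c] by auto
    qed simp
    also have "\<dots> = \<zero>" using c r unfolding C_mem by simp
    finally show "mv R H (S \<times> Y) c row = \<zero>" .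
  qed
  moreover have "c \<in> S \<times> Y \<rightarrow> carrier R" using Cc[OF c] SV by auto
  ultimately have "\<forall>col\<in>S \<times> Y. c col = \<zero>" using good[OF SV cardS] by blast
  then have "\<forall>i\<in>V \<times> Y. c i = \<zero>" using zero_out by auto
  moreover have "c \<in> V \<times> Y \<rightarrow>\<^sub>E carrier R" using c unfolding C_mem by simp
  ultimately show ?thesis unfolding zv_def by (auto simp: PiE_iff intro: extensionalityI[of _ "V \<times> Y"])
qed

lemma hamming_eq:
  assumes "c \<in> C" "c' \<in> C"
  shows "hamming V Y c c' = card (supp (\<lambda>i\<in>V \<times> Y. c i \<ominus> c' i))"
proof -
  have "{v \<in> V. (\<lambda>y\<in>Y. c (v, y)) \<noteq> (\<lambda>y\<in>Y. c' (v, y))} = supp (\<lambda>i\<in>V \<times> Y. c i \<ominus> c' i)"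
  proof (intro equalityI subsetI)
    fix v assume "v \<in> {v \<in> V. (\<lambda>y\<in>Y. c (v, y)) \<noteq> (\<lambda>y\<in>Y. c' (v, y))}"
    then obtain y where "v \<in> V" "y \<in> Y" "c (v, y) \<noteq> c' (v, y)" by (auto simp: restrict_def fun_eq_iff split: if_splits)
    then show "v \<in> supp (\<lambda>i\<in>V \<times> Y. c i \<ominus> c' i)"
      unfolding supp_def using minus_eq_zero_iff Cc assms by auto
  next
    fix v assume "v \<in> supp (\<lambda>i\<in>V \<times> Y. c i \<ominus> c' i)"
    then obtain y where "v \<in> V" "y \<in> Y" "c (v, y) \<ominus> c' (v, y) \<noteq> \<zero>" unfolding supp_def by auto
    then have "v \<in> V" "y \<in> Y" "c (v, y) \<noteq> c' (v, y)" using minus_eq_zero_iff Cc assms by auto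
    then show "v \<in> {v \<in> V. (\<lambda>y\<in>Y. c (v, y)) \<noteq> (\<lambda>y\<in>Y. c' (v, y))}" by (metis (mono_tags, lifting) mem_Collect_eq restrict_apply')
  qed
  then show ?thesis unfolding hamming_def by simp
qed

lemma min_dist:
  assumes "c \<in> C" "c' \<in> C" "c \<noteq> c'"
  shows "n - k + 1 \<le> hamming V Y c c'"
proof (rule ccontr)
  assume "\<not> ?thesis"
  then have "card (supp (\<lambda>i\<in>V \<times> Y. c i \<ominus> c' i)) \<le> n - k" using hamming_eq[OF assms(1,2)] by simp
  then have z: "(\<lambda>i\<in>V \<times> Y. c i \<ominus> c' i) = zv" using small_supp_zero diff_C assms by blast
  have "\<forall>i\<in>V \<times> Y. c i = c' i"
  proof
    fix i assume i: "i \<in> V \<times> Y"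
    then have "c i \<ominus> c' i = \<zero>" using fun_cong[OF z, of i] unfolding zv_def by simp
    then show "c i = c' i" using minus_eq_zero_iff Cc[OF assms(1) i] Cc[OF assms(2) i] by blast
  qed
  then have "c = c'" using assms(1,2) unfolding C_mem by (metis PiE_ext)
  then show False using assms(3) by simp
qed


lemma diff_zero_eq:
  assumes "c \<in> C" "c' \<in> C" "(\<lambda>i\<in>V \<times> Y. c i \<ominus> c' i) = zv"
  shows "c = c'"
proof -
  have E: "\<forall>i\<in>V \<times> Y. c i = c' i"
  proof
    fix i assume i: "i \<in> V \<times> Y"
    then have "c i \<ominus> c' i = \<zero>" using fun_cong[OF assms(3), of i] unfolding zv_def by simp
    then show "c i = c' i" using minus_eq_zero_iff Cc[OF assms(1) i] Cc[OF assms(2) i] by blast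
  qed
  have P1: "c \<in> V \<times> Y \<rightarrow>\<^sub>E carrier R" and P2: "c' \<in> V \<times> Y \<rightarrow>\<^sub>E carrier R" using assms unfolding C_mem by auto
  show ?thesis by (rule PiE_ext[OF P1 P2], rule bspec[OF E])
qed

lemma dim_and_witness:
  "has_dim R (V \<times> Y) C (k * card Y) \<and> (\<exists>c\<in>C. \<exists>c'\<in>C. c \<noteq> c' \<and> hamming V Y c c' = n - k + 1)"
proof -
  obtain T where T: "T \<subseteq> V" "card T = k" using obtain_subset_with_card_n[of k V] kn cardV by metis
  define S where "S = V - T"
  have SV: "S \<subseteq> V" unfolding S_def by auto
  have finT: "finite T" using T finV finite_subset by blast
  have cardS: "card S = n - k" unfolding S_def using T finT cardV by (simp add: card_Diff_subset)
  have VTS: "V \<times> Y = T \<times> Y \<union> S \<times> Y" and disj: "T \<times> Y \<inter> S \<times> Y = {}" unfolding S_def using T by auto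
  have finTY: "finite (T \<times> Y)" and finSY: "finite (S \<times> Y)"
    using finT finY finV SV finite_subset by auto
  have ext_ex: "\<exists>c\<in>C. \<forall>i\<in>T \<times> Y. c i = u i" if u: "u \<in> T \<times> Y \<rightarrow> carrier R" for u
  proof -
    define u' where "u' row = \<ominus> mv R H (T \<times> Y) u row" for row
    have Hc': "H row col \<in> carrier R" if "row \<in> Rw" "col \<in> S \<times> Y" for row col
      using Hc that SV by auto
    have HcT: "H row col \<in> carrier R" if "row \<in> Rw" "col \<in> T \<times> Y" for row col
      using Hc that T by auto
    have mvTc: "mv R H (T \<times> Y) u row \<in> carrier R" if "row \<in> Rw" for row
      using HcT[OF that] u by (intro mv_closed) auto
    have "\<exists>w\<in>S \<times> Y \<rightarrow>\<^sub>E carrier R. \<forall>row\<in>Rw. mv R H (S \<times> Y) w row = u' row"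
    proof (rule inj_surj)
      show "finite (carrier R)" "finite Rw" "finite (S \<times> Y)" by (fact finR, fact finRw, fact finSY)
      show "card Rw = card (S \<times> Y)" using cardRw cardS finY by (simp add: card_cartesian_product)
      show "\<And>i j. i \<in> Rw \<Longrightarrow> j \<in> S \<times> Y \<Longrightarrow> H i j \<in> carrier R" by (rule Hc')
      show "\<And>w. w \<in> S \<times> Y \<rightarrow> carrier R \<Longrightarrow> \<forall>i\<in>Rw. mv R H (S \<times> Y) w i = \<zero> \<Longrightarrow> \<forall>j\<in>S \<times> Y. w j = \<zero>"
        by (rule good[OF SV cardS])
      show "u' \<in> Rw \<rightarrow> carrier R" unfolding u'_def using mvTc by auto
    qed
    then obtain w where w: "w \<in> S \<times> Y \<rightarrow>\<^sub>E carrier R" "\<forall>row\<in>Rw. mv R H (S \<times> Y) w row = u' row" by blast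
    define c where "c = (\<lambda>i\<in>V \<times> Y. if fst i \<in> T then u i else w i)"
    have cc: "c \<in> V \<times> Y \<rightarrow>\<^sub>E carrier R"
      unfolding c_def using u w(1) unfolding S_def by (auto simp: PiE_iff)
    have "\<forall>row\<in>Rw. mv R H (V \<times> Y) c row = \<zero>"
    proof
      fix row assume r: "row \<in> Rw"
      have "mv R H (V \<times> Y) c row = mv R H (T \<times> Y) c row \<oplus> mv R H (S \<times> Y) c row"
        unfolding mv_def VTS
        by (rule finsum_Un_disjoint[OF finTY finSY disj]) (use Hc r cc VTS in \<open>auto simp: PiE_iff\<close>)
      also have "mv R H (T \<times> Y) c row = mv R H (T \<times> Y) u row"
        using HcT[OF r] u T unfolding c_def by (intro mv_cong) auto
      also have "mv R H (S \<times> Y) c row = mv R H (S \<times> Y) w row"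
        using Hc'[OF r] w(1) SV unfolding c_def S_def by (intro mv_cong) (auto simp: PiE_iff)
      also have "\<dots> = u' row" using w(2) r by simp
      finally show "mv R H (V \<times> Y) c row = \<zero>"
        unfolding u'_def using mvTc[OF r] by (simp add: r_neg)
    qed
    then have "c \<in> C" using cc unfolding C_mem by simp
    moreover have "\<forall>i\<in>T \<times> Y. c i = u i" unfolding c_def using T by auto
    ultimately show ?thesis by blast
  qed
  have uniq: "c1 = c2" if "c1 \<in> C" "c2 \<in> C" "\<forall>i\<in>T \<times> Y. c1 i = c2 i" for c1 c2
  proof -
    let ?d = "\<lambda>i\<in>V \<times> Y. c1 i \<ominus> c2 i"
    have "supp ?d \<subseteq> S"
    proof
      fix v assume "v \<in> supp ?d"
      then obtain y where vy: "v \<in> V" "y \<in> Y" "c1 (v, y) \<ominus> c2 (v, y) \<noteq> \<zero>" unfolding supp_def by auto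
      show "v \<in> S"
      proof (rule ccontr)
        assume "v \<notin> S"
        then have "v \<in> T" using vy unfolding S_def by auto
        then have "c1 (v, y) = c2 (v, y)" using that(3) vy by auto
        then show False using vy Cc[OF that(2)] by (simp add: minus_eq r_neg)
      qed
    qed
    then have "card (supp ?d) \<le> n - k" using cardS finV SV finite_subset card_mono by metis
    then have "?d = zv" using small_supp_zero diff_C that(1,2) by blast
    then show ?thesis using diff_zero_eq that(1,2) by blast
  qed
  define e where "e i = (SOME c. c \<in> C \<and> (\<forall>j\<in>T \<times> Y. c j = (if j = i then \<one> else \<zero>)))" for i
  have e_prop: "e i \<in> C \<and> (\<forall>j\<in>T \<times> Y. e i j = (if j = i then \<one> else \<zero>))" if "i \<in> T \<times> Y" for i
  proof -
    have "(\<lambda>j. if j = i then \<one> else \<zero>) \<in> T \<times> Y \<rightarrow> carrier R" by auto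
    then have "\<exists>c. c \<in> C \<and> (\<forall>j\<in>T \<times> Y. c j = (if j = i then \<one> else \<zero>))" using ext_ex by blast
    then show ?thesis unfolding e_def by (rule someI_ex)
  qed
  have eC: "e i \<in> C" if "i \<in> T \<times> Y" for i using e_prop[OF that] by blast
  have ev: "e i j = (if j = i then \<one> else \<zero>)" if "i \<in> T \<times> Y" "j \<in> T \<times> Y" for i j
    using e_prop[OF that(1)] that(2) by blast
  define B where "B = e ` (T \<times> Y)"
  have einj: "inj_on e (T \<times> Y)"
  proof (rule inj_onI)
    fix i j assume ij: "i \<in> T \<times> Y" "j \<in> T \<times> Y" "e i = e j"
    have "e i i = \<one>" using ev[OF ij(1) ij(1)] by simp
    moreover have "e j i = (if i = j then \<one> else \<zero>)" using ev[OF ij(2) ij(1)] .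
    ultimately show "i = j" using ij(3) by (metis zero_not_one)
  qed
  have finB: "finite B" unfolding B_def using finTY by simp
  have BC: "B \<subseteq> C" unfolding B_def using eC by auto
  have cardB: "card B = k * card Y"
    unfolding B_def using card_image[OF einj] T finY by (simp add: card_cartesian_product)
  have lc_eval: "lin_comb R (V \<times> Y) B f i0 = f (e i0)" if f: "f \<in> B \<rightarrow> carrier R" and i0: "i0 \<in> T \<times> Y" for f i0
  proof -
    have i0V: "i0 \<in> V \<times> Y" using i0 T by auto
    have "lin_comb R (V \<times> Y) B f i0 = (\<Oplus>u\<in>B. f u \<otimes> u i0)" unfolding lin_comb_def using i0V by simp
    also have "\<dots> = (\<Oplus>i\<in>T \<times> Y. f (e i) \<otimes> e i i0)"
      unfolding B_def
    proof (rule finsum_reindex[OF _ einj])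
      show "(\<lambda>u. f u \<otimes> u i0) \<in> e ` (T \<times> Y) \<rightarrow> carrier R"
      proof
        fix u assume u: "u \<in> e ` (T \<times> Y)"
        then obtain i where i: "i \<in> T \<times> Y" "u = e i" by auto
        have "f u \<in> carrier R" using f u unfolding B_def by auto
        moreover have "u i0 \<in> carrier R" using Cc[OF eC[OF i(1)] i0V] i(2) by simp
        ultimately show "f u \<otimes> u i0 \<in> carrier R" by simp
      qed
    qed
    also have "\<dots> = (\<Oplus>i\<in>T \<times> Y. if i0 = i then f (e i) else \<zero>)"
    proof (intro finsum_cong')
      fix i assume i: "i \<in> T \<times> Y"
      have "f (e i) \<in> carrier R" using f i unfolding B_def by auto
      then show "f (e i) \<otimes> e i i0 = (if i0 = i then f (e i) else \<zero>)" using ev[OF i i0] by auto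
    qed (use f in \<open>auto simp: B_def\<close>)
    also have "\<dots> = f (e i0)"
      by (rule finsum_singleton[OF i0 finTY]) (use f in \<open>auto simp: B_def\<close>)
    finally show ?thesis .
  qed
  have lc_C: "lin_comb R (V \<times> Y) B f \<in> C" if f: "f \<in> B \<rightarrow> carrier R" for f
    unfolding C_mem
  proof (intro conjI ballI)
    have fc: "(\<lambda>u. f u \<otimes> u i) \<in> B \<rightarrow> carrier R" if "i \<in> V \<times> Y" for i
    proof
      fix u assume u: "u \<in> B"
      have "f u \<in> carrier R" using f u by (rule funcset_mem)
      moreover have "u i \<in> carrier R" using Cc[OF subsetD[OF BC u] that] .
      ultimately show "f u \<otimes> u i \<in> carrier R" by simp
    qed
    show "lin_comb R (V \<times> Y) B f \<in> V \<times> Y \<rightarrow>\<^sub>E carrier R"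
      unfolding lin_comb_def using fc by (auto intro!: finsum_closed)
    fix row assume r: "row \<in> Rw"
    have "mv R H (V \<times> Y) (lin_comb R (V \<times> Y) B f) row = mv R H (V \<times> Y) (\<lambda>i. \<Oplus>u\<in>B. f u \<otimes> u i) row"
      unfolding lin_comb_def using fc Hc r by (intro mv_cong) (auto intro!: finsum_closed)
    also have "\<dots> = (\<Oplus>u\<in>B. f u \<otimes> mv R H (V \<times> Y) u row)"
      using finVY finB Hc r BC Cc f by (intro mv_lincomb) auto
    also have "\<dots> = \<zero>"
    proof (intro add.finprod_one_eqI)
      fix u assume u: "u \<in> B"
      then have "u \<in> C" using BC by auto
      then have "mv R H (V \<times> Y) u row = \<zero>" using r by (simp add: C_mem)
      then show "f u \<otimes> mv R H (V \<times> Y) u row = \<zero>" using funcset_mem[OF f u] by simp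
    qed
    finally show "mv R H (V \<times> Y) (lin_comb R (V \<times> Y) B f) row = \<zero>" .
  qed
  have indep: "lin_indep R (V \<times> Y) B"
    unfolding lin_indep_def
  proof (intro conjI finB ballI impI)
    fix f u assume f: "f \<in> B \<rightarrow> carrier R" and z: "lin_comb R (V \<times> Y) B f = (\<lambda>i\<in>V \<times> Y. \<zero>)"
      and u: "u \<in> B"
    then obtain i0 where i0: "i0 \<in> T \<times> Y" "u = e i0" unfolding B_def by auto
    have "i0 \<in> V \<times> Y" using i0 T by auto
    then have "lin_comb R (V \<times> Y) B f i0 = \<zero>" using z by simp
    then show "f u = \<zero>" using lc_eval[OF f i0(1)] i0(2) by simp
  qed
  have span: "lin_span R (V \<times> Y) B = C"
  proof (intro equalityI subsetI)
    fix x assume "x \<in> lin_span R (V \<times> Y) B"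
    then show "x \<in> C" unfolding lin_span_def using lc_C by auto
  next
    fix c assume c: "c \<in> C"
    define f where "f u = c (inv_into (T \<times> Y) e u)" for u
    have f: "f \<in> B \<rightarrow> carrier R"
    proof
      fix u assume "u \<in> B"
      then have "inv_into (T \<times> Y) e u \<in> T \<times> Y" unfolding B_def by (rule inv_into_into)
      then show "f u \<in> carrier R" unfolding f_def using Cc[OF c] T by auto
    qed
    have "lin_comb R (V \<times> Y) B f = c"
    proof (rule uniq[OF lc_C[OF f] c], rule ballI)
      fix i assume i: "i \<in> T \<times> Y"
      show "lin_comb R (V \<times> Y) B f i = c i"
        using lc_eval[OF f i] inv_into_f_f[OF einj i] unfolding f_def by simp
    qed
    then show "c \<in> lin_span R (V \<times> Y) B" unfolding lin_span_def using f by blast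
  qed
  have hd: "has_dim R (V \<times> Y) C (k * card Y)"
    unfolding has_dim_def using BC cardB indep span by blast
  obtain v0 where v0: "v0 \<in> T" using T k1 by (metis card.empty ex_in_conv not_one_le_zero)
  obtain y0 where y0: "y0 \<in> Y" using Yne by blast
  have i0: "(v0, y0) \<in> T \<times> Y" using v0 y0 by simp
  let ?c = "e (v0, y0)"
  have cC: "?c \<in> C" by (rule eC[OF i0])
  have c1: "?c (v0, y0) = \<one>" using ev[OF i0 i0] by simp
  have ne: "?c \<noteq> zv"
  proof
    assume "?c = zv"
    then have "?c (v0, y0) = \<zero>" unfolding zv_def using i0 T by auto
    then show False using c1 by simp
  qed
  have "supp (\<lambda>i\<in>V \<times> Y. ?c i \<ominus> zv i) \<subseteq> insert v0 S"
  proof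
    fix v assume "v \<in> supp (\<lambda>i\<in>V \<times> Y. ?c i \<ominus> zv i)"
    then obtain y where vy: "v \<in> V" "y \<in> Y" "?c (v, y) \<ominus> zv (v, y) \<noteq> \<zero>" unfolding supp_def by auto
    then have "?c (v, y) \<noteq> \<zero>" using Cc[OF cC] unfolding zv_def by (auto simp: minus_eq)
    show "v \<in> insert v0 S"
    proof (cases "v \<in> T")
      case True
      then have "(v, y) \<in> T \<times> Y" using vy by simp
      then have "(v, y) = (v0, y0)" using ev[OF i0] \<open>?c (v, y) \<noteq> \<zero>\<close> by (auto split: if_splits)
      then show ?thesis by simp
    next
      case False
      then show ?thesis using vy unfolding S_def by simp
    qed
  qed
  then have "card (supp (\<lambda>i\<in>V \<times> Y. ?c i \<ominus> zv i)) \<le> card (insert v0 S)"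
    using finV SV by (intro card_mono) (auto intro: finite_subset)
  also have "\<dots> \<le> n - k + 1" using cardS card_insert_le_m1 by (metis Suc_eq_plus1 card_insert_if le_refl order.trans le_SucI finite_subset finV SV)
  finally have "hamming V Y ?c zv \<le> n - k + 1" using hamming_eq[OF cC zv_C] by simp
  moreover have "n - k + 1 \<le> hamming V Y ?c zv" using min_dist[OF cC zv_C ne] .
  ultimately have "hamming V Y ?c zv = n - k + 1" by simp
  then show ?thesis using hd cC zv_C ne by blast
qed

end



lemma nodes_eq: "cs_nodes t q s = ({1..t-1} \<times> {..<q}) \<union> ({t} \<times> {..<s})"
  unfolding cs_nodes_def by auto

lemma nodes_finite: "finite (cs_nodes t q s)"
  unfolding nodes_eq by simp

lemma nodes_card:
  assumes "1 < t"
  shows "card (cs_nodes t q s) = (t - 1) * q + s"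
proof -
  have "({1..t-1} \<times> {..<q}) \<inter> ({t} \<times> {..<s}) = {}" using assms by auto
  then show ?thesis unfolding nodes_eq by (simp add: card_Un_disjoint card_cartesian_product)
qed

lemma iota_range:
  assumes "1 < t" "s \<le> q" "n = (t - 1) * q + s" "v \<in> cs_nodes t q s"
  shows "cs_iota q v \<in> {1..n}"
proof -
  obtain j \<theta> where v: "v = (j, \<theta>)" by (cases v)
  have "cs_iota q v \<le> n"
  proof (cases "j = t")
    case True
    then have "\<theta> < s" using assms(4) v unfolding cs_nodes_def by auto
    then show ?thesis using True assms(3) v unfolding cs_iota_def by simp
  next
    case False
    then have j: "1 \<le> j" "j \<le> t - 1" "\<theta> < q" using assms(4) v unfolding cs_nodes_def by auto
    have "(j - 1) * q + \<theta> + 1 \<le> (j - 1) * q + q" using j by simp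
    also have "\<dots> = j * q" using j by (cases j) auto
    also have "\<dots> \<le> (t - 1) * q" using j by (intro mult_le_mono1)
    finally show ?thesis using assms(3) v unfolding cs_iota_def by simp
  qed
  then show ?thesis unfolding cs_iota_def by simp
qed

lemma iota_inj:
  assumes "s \<le> q" "1 \<le> t"
  shows "inj_on (cs_iota q) (cs_nodes t q s)"
proof (rule inj_onI)
  fix v v' assume v: "v \<in> cs_nodes t q s" and v': "v' \<in> cs_nodes t q s" and eq: "cs_iota q v = cs_iota q v'"
  obtain j \<theta> where vv: "v = (j, \<theta>)" by (cases v)
  obtain j' \<theta>' where vv': "v' = (j', \<theta>')" by (cases v')
  have h: "1 \<le> j" "\<theta> < q" using v vv assms unfolding cs_nodes_def by auto
  have h': "1 \<le> j'" "\<theta>' < q" using v' vv' assms unfolding cs_nodes_def by auto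
  have e: "(j - 1) * q + \<theta> = (j' - 1) * q + \<theta>'" using eq vv vv' unfolding cs_iota_def by simp
  have "\<theta> = \<theta>'"
    using arg_cong[OF e, of "\<lambda>x. x mod q"] h h' by simp
  moreover have "j - 1 = j' - 1"
    using arg_cong[OF e, of "\<lambda>x. x div q"] h h' by simp
  ultimately show "v = v'" using vv vv' h h' by simp
qed

lemma states_finite: "finite (cs_states t q)"
  unfolding cs_states_def by (simp add: finite_PiE)

lemma states_card: "card (cs_states t q) = q ^ t"
  unfolding cs_states_def by (simp add: card_PiE)

lemma states_ne: "0 < q \<Longrightarrow> cs_states t q \<noteq> {}"
  unfolding cs_states_def by (auto simp: PiE_eq_empty_iff)


context field
begin

lemma delta_sum:
  assumes finS: "finite S" and finY: "finite Y" and x: "x \<in> Y"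
    and cc: "\<And>v. v \<in> S \<Longrightarrow> c v \<in> carrier R" and wc: "w \<in> S \<times> Y \<rightarrow> carrier R"
  shows "(\<Oplus>col\<in>S \<times> Y. (if x = snd col then c (fst col) else \<zero>) \<otimes> w col) = (\<Oplus>v\<in>S. c v \<otimes> w (v, x))"
proof -
  have "(\<Oplus>col\<in>S \<times> Y. (if x = snd col then c (fst col) else \<zero>) \<otimes> w col) =
        (\<Oplus>col\<in>(\<lambda>v. (v, x)) ` S. (if x = snd col then c (fst col) else \<zero>) \<otimes> w col)"
  proof (rule add.finprod_mono_neutral_cong_right)
    show "finite (S \<times> Y)" using finS finY by simp
    show "(\<lambda>v. (v, x)) ` S \<subseteq> S \<times> Y" using x by auto
    show "\<And>i. i \<in> S \<times> Y - (\<lambda>v. (v, x)) ` S \<Longrightarrow> (if x = snd i then c (fst i) else \<zero>) \<otimes> w i = \<zero>"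
    proof -
      fix i assume i: "i \<in> S \<times> Y - (\<lambda>v. (v, x)) ` S"
      then have "x \<noteq> snd i" by (cases i) auto
      moreover have "w i \<in> carrier R" using i wc by auto
      ultimately show "(if x = snd i then c (fst i) else \<zero>) \<otimes> w i = \<zero>" by simp
    qed
    show "(\<lambda>i. (if x = snd i then c (fst i) else \<zero>) \<otimes> w i) \<in> S \<times> Y \<rightarrow> carrier R"
    proof
      fix i assume i: "i \<in> S \<times> Y"
      then have "c (fst i) \<in> carrier R" "w i \<in> carrier R" using cc wc by auto
      then show "(if x = snd i then c (fst i) else \<zero>) \<otimes> w i \<in> carrier R" by simp
    qed
  qed simp
  also have "\<dots> = (\<Oplus>v\<in>S. (if x = snd (v, x) then c (fst (v, x)) else \<zero>) \<otimes> w (v, x))"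
  proof (rule finsum_reindex)
    show "inj_on (\<lambda>v. (v, x)) S" by (rule inj_onI) simp
    show "(\<lambda>col. (if x = snd col then c (fst col) else \<zero>) \<otimes> w col) \<in> (\<lambda>v. (v, x)) ` S \<rightarrow> carrier R"
    proof
      fix i assume i: "i \<in> (\<lambda>v. (v, x)) ` S"
      then have "i \<in> S \<times> Y" using x by auto
      then have "c (fst i) \<in> carrier R" "w i \<in> carrier R" using cc wc by auto
      then show "(if x = snd i then c (fst i) else \<zero>) \<otimes> w i \<in> carrier R" by simp
    qed
  qed
  also have "\<dots> = (\<Oplus>v\<in>S. c v \<otimes> w (v, x))" by simp
  finally show ?thesis .
qed

lemma M0_inj:
  fixes a b :: "nat \<Rightarrow> 'a" and io :: "'v \<Rightarrow> nat"
  assumes ac: "a ` {1..N} \<subseteq> carrier R" and bc: "b ` {1..n} \<subseteq> carrier R"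
    and ai: "inj_on a {1..N}" and bi: "inj_on b {1..n}" and ab: "a ` {1..N} \<inter> b ` {1..n} = {}"
    and io: "io ` S \<subseteq> {1..n}" "inj_on io S" and finS: "finite S" and cardS: "card S = N"
    and finY: "finite Y"
    and w: "w \<in> S \<times> Y \<rightarrow> carrier R"
    and z: "\<forall>row\<in>{1..N} \<times> Y. mv R (\<lambda>row col. if snd row = snd col then inv (a (fst row) \<ominus> b (io (fst col))) else \<zero>) (S \<times> Y) w row = \<zero>"
  shows "\<forall>col\<in>S \<times> Y. w col = \<zero>"
proof
  fix col assume col: "col \<in> S \<times> Y"
  obtain v x where vx: "col = (v, x)" "v \<in> S" "x \<in> Y" using col by auto
  have abne: "a r \<noteq> b (io u)" if "r \<in> {1..N}" "u \<in> S" for r u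
    using ab that io(1) by blast
  have ic: "inv (a r \<ominus> b (io u)) \<in> carrier R" if "r \<in> {1..N}" "u \<in> S" for r u
  proof -
    have "io u \<in> {1..n}" using io(1) that(2) by blast
    then have "b (io u) \<in> carrier R" using bc by blast
    moreover have "a r \<in> carrier R" using ac that(1) by blast
    ultimately have "a r \<in> carrier R" "b (io u) \<in> carrier R" by auto
    then show ?thesis using nonzero_inv diff_nonzero abne[OF that] by simp
  qed
  have "\<forall>j\<in>S. w (j, x) = \<zero>"
  proof (rule cauchy_inj[OF finS, of "{1..N}" a "\<lambda>u. b (io u)" "\<lambda>u. w (u, x)"])
    show "finite {1..N}" by simp
    show "card {1..N} = card S" using cardS by simp
    show "a ` {1..N} \<subseteq> carrier R" by (rule ac)
    show "(\<lambda>u. b (io u)) ` S \<subseteq> carrier R" using bc io(1) by auto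
    show "inj_on a {1..N}" by (rule ai)
    show "inj_on (\<lambda>u. b (io u)) S"
      using inj_on_subset[OF bi io(1)] io(2) by (simp add: inj_on_def)
    show "a ` {1..N} \<inter> (\<lambda>u. b (io u)) ` S = {}" using ab io(1) by blast
    show "(\<lambda>u. w (u, x)) \<in> S \<rightarrow> carrier R" using w vx by auto
    show "\<forall>i\<in>{1..N}. (\<Oplus>j\<in>S. inv (a i \<ominus> b (io j)) \<otimes> w (j, x)) = \<zero>"
    proof
      fix r assume r: "r \<in> {1..N}"
      have "(\<Oplus>j\<in>S. inv (a r \<ominus> b (io j)) \<otimes> w (j, x)) =
          (\<Oplus>c\<in>S \<times> Y. (if x = snd c then inv (a r \<ominus> b (io (fst c))) else \<zero>) \<otimes> w c)"
        by (rule delta_sum[symmetric, OF finS finY vx(3) ic[OF r] w])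
      also have "\<dots> = mv R (\<lambda>row col. if snd row = snd col then inv (a (fst row) \<ominus> b (io (fst col))) else \<zero>) (S \<times> Y) w (r, x)"
        unfolding mv_def by (simp only: fst_conv snd_conv)
      also have "\<dots> = \<zero>" using z r vx(3) by auto
      finally show "(\<Oplus>j\<in>S. inv (a r \<ominus> b (io j)) \<otimes> w (j, x)) = \<zero>" .
    qed
  qed
  then show "w col = \<zero>" using vx by simp
qed


lemma main_aux:
  fixes n k d t s q :: nat and a b :: "nat \<Rightarrow> 'a"
  assumes k1: "1 \<le> k" and kd: "k < d" and dn: "d \<le> n - 1"
    and t1: "1 < t" and s1: "1 \<le> s" and sdk: "s \<le> d - k"
    and nq: "n = (t - 1) * q + s" and qd: "q = d - k + 1"
    and finR: "finite (carrier R)" and bigR: "2 ^ n * ((n - k) * q ^ t) + 2 \<le> card (carrier R)"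
    and ac: "a ` {1..n-k} \<subseteq> carrier R" and bc: "b ` {1..n} \<subseteq> carrier R"
    and ai: "inj_on a {1..n-k}" and bi: "inj_on b {1..n}" and ab: "a ` {1..n-k} \<inter> b ` {1..n} = {}"
  shows "\<exists>\<rho>\<in>carrier R - {\<zero>}. is_vector_code R (cs_nodes t q s) (cs_states t q)
            (cs_code R a b n k d t s \<rho>) n (k * q ^ t) (n - k + 1) (q ^ t)"
proof -
  define V where "V = cs_nodes t q s"
  define Y where "Y = cs_states t q"
  define Rw where "Rw = {1..n-k} \<times> Y"
  have sq: "s \<le> q" using sdk qd by simp
  have q0: "0 < q" using qd by simp
  have finV: "finite V" unfolding V_def by (rule nodes_finite)
  have cardV: "card V = n" unfolding V_def using nodes_card[OF t1] nq by simp
  have ioV: "cs_iota q ` V \<subseteq> {1..n}" unfolding V_def using iota_range[OF t1 sq nq] by blast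
  have ioinj: "inj_on (cs_iota q) V" unfolding V_def using iota_inj[OF sq] t1 by simp
  have finY: "finite Y" unfolding Y_def by (rule states_finite)
  have cardY: "card Y = q ^ t" unfolding Y_def by (rule states_card)
  have Yne: "Y \<noteq> {}" unfolding Y_def using states_ne q0 by simp
  have finRw: "finite Rw" unfolding Rw_def using finY by simp
  have cardRw: "card Rw = (n - k) * card Y" unfolding Rw_def using finY by (simp add: card_cartesian_product)
  have kn: "k \<le> n" using kd dn by simp
  define M0 :: "nat \<times> (nat \<Rightarrow> nat) \<Rightarrow> (nat \<times> nat) \<times> (nat \<Rightarrow> nat) \<Rightarrow> 'a" where "M0 = (\<lambda>row col. if snd row = snd col then inv (a (fst row) \<ominus> b (cs_iota q (fst col))) else \<zero>)"
  define E0 :: "nat \<times> (nat \<Rightarrow> nat) \<Rightarrow> (nat \<times> nat) \<times> (nat \<Rightarrow> nat) \<Rightarrow> 'a" where "E0 = (\<lambda>row col. if n - d < fst row \<and> (\<exists>j\<in>{1..t}. fst col = (j, snd row j) \<and>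
        snd col = cs_shift q (snd row) j (fst row - (n - d))) then \<one> else \<zero>)"
  have M0c: "M0 row col \<in> carrier R" if "row \<in> Rw" "col \<in> V \<times> Y" for row col
  proof -
    have r: "fst row \<in> {1..n-k}" using that(1) unfolding Rw_def by auto
    have v: "cs_iota q (fst col) \<in> {1..n}" using that(2) ioV by auto
    have "a (fst row) \<in> carrier R" using ac r by blast
    moreover have "b (cs_iota q (fst col)) \<in> carrier R" using bc v by blast
    moreover have "a (fst row) \<noteq> b (cs_iota q (fst col))" using ab r v by blast
    ultimately have "inv (a (fst row) \<ominus> b (cs_iota q (fst col))) \<in> carrier R"
      using nonzero_inv diff_nonzero by simp
    then show ?thesis unfolding M0_def by simp
  qed
  have E0c: "E0 row col \<in> carrier R" for row col unfolding E0_def by simp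
  have Heq: "cs_H R a b n d t q \<rho> row col = M0 row col \<oplus> \<rho> \<otimes> E0 row col"
    if "\<rho> \<in> carrier R" "row \<in> Rw" "col \<in> V \<times> Y" for \<rho> row col
    using M0c[OF that(2,3)] that(1) unfolding cs_H_def Let_def M0_def E0_def by auto
  have Hc: "cs_H R a b n d t q \<rho> row col \<in> carrier R"
    if "\<rho> \<in> carrier R" "row \<in> Rw" "col \<in> V \<times> Y" for \<rho> row col
    using Heq[OF that] M0c[OF that(2,3)] E0c that(1) by simp
  have mvHeq: "mv R (cs_H R a b n d t q \<rho>) J w row = mv R (\<lambda>i j. M0 i j \<oplus> \<rho> \<otimes> E0 i j) J w row"
    if "\<rho> \<in> carrier R" "J \<subseteq> V \<times> Y" "row \<in> Rw" "w \<in> J \<rightarrow> carrier R" for \<rho> J w row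
    unfolding mv_def
  proof (rule finsum_cong')
    show "(\<lambda>j. (M0 row j \<oplus> \<rho> \<otimes> E0 row j) \<otimes> w j) \<in> J \<rightarrow> carrier R"
    proof
      fix j assume j: "j \<in> J"
      then have "j \<in> V \<times> Y" using that(2) by blast
      then have "M0 row j \<in> carrier R" using M0c that(3) by blast
      moreover have "w j \<in> carrier R" using that(4) j by (rule funcset_mem)
      ultimately show "(M0 row j \<oplus> \<rho> \<otimes> E0 row j) \<otimes> w j \<in> carrier R" using E0c that(1) by simp
    qed
    fix j assume j: "j \<in> J"
    then have "j \<in> V \<times> Y" using that(2) by blast
    then show "cs_H R a b n d t q \<rho> row j \<otimes> w j = (M0 row j \<oplus> \<rho> \<otimes> E0 row j) \<otimes> w j"
      using Heq[OF that(1) that(3)] by simp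
  next
  qed simp
  have M0inj: "\<forall>col\<in>S \<times> Y. w col = \<zero>"
    if S: "S \<subseteq> V" "card S = n - k" and w: "w \<in> S \<times> Y \<rightarrow> carrier R"
      and z: "\<forall>row\<in>Rw. mv R M0 (S \<times> Y) w row = \<zero>" for S w
  proof -
    have finS: "finite S" using S finV finite_subset by blast
    show ?thesis
    proof (rule M0_inj[OF ac bc ai bi ab _ _ finS S(2) finY w])
      show "cs_iota q ` S \<subseteq> {1..n}" using S ioV by blast
      show "inj_on (cs_iota q) S" using ioinj S inj_on_subset by blast
      show "\<forall>row\<in>{1..n - k} \<times> Y. mv R (\<lambda>row col. if snd row = snd col then inv (a (fst row) \<ominus> b (cs_iota q (fst col))) else \<zero>) (S \<times> Y) w row = \<zero>"
        using z unfolding M0_def Rw_def .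
    qed
  qed
  define SS where "SS = {S. S \<subseteq> V \<and> card S = n - k}"
  define bad where "bad S = {\<rho>\<in>carrier R - {\<zero>}. \<exists>w\<in>S \<times> Y \<rightarrow> carrier R. (\<exists>j\<in>S \<times> Y. w j \<noteq> \<zero>) \<and>
            (\<forall>i\<in>Rw. mv R (\<lambda>i j. M0 i j \<oplus> \<rho> \<otimes> E0 i j) (S \<times> Y) w i = \<zero>)}" for S
  have badcard: "card (bad S) \<le> (n - k) * q ^ t" if S: "S \<in> SS" for S
  proof -
    have SV: "S \<subseteq> V" and cS: "card S = n - k" using S unfolding SS_def by auto
    have finS: "finite S" using SV finV finite_subset by blast
    have "card (bad S) \<le> card (S \<times> Y)"
      unfolding bad_def
    proof (rule bad_card[OF finR finRw])
      show "finite (S \<times> Y)" using finS finY by simp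
      show "\<And>i j. i \<in> Rw \<Longrightarrow> j \<in> S \<times> Y \<Longrightarrow> M0 i j \<in> carrier R" using M0c SV by blast
      show "\<And>i j. i \<in> Rw \<Longrightarrow> j \<in> S \<times> Y \<Longrightarrow> E0 i j \<in> carrier R" using E0c by blast
      show "\<And>w. w \<in> S \<times> Y \<rightarrow> carrier R \<Longrightarrow> \<forall>i\<in>Rw. mv R M0 (S \<times> Y) w i = \<zero> \<Longrightarrow> \<forall>j\<in>S \<times> Y. w j = \<zero>"
        using M0inj[OF SV cS] by blast
    qed
    also have "\<dots> = (n - k) * q ^ t" using cS cardY finS finY by (simp add: card_cartesian_product)
    finally show ?thesis .
  qed
  define U where "U = (\<Union>S\<in>SS. bad S)"
  have finSS: "finite SS" unfolding SS_def using finV by simp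
  have cardSS: "card SS \<le> 2 ^ n"
  proof -
    have "SS \<subseteq> Pow V" unfolding SS_def by auto
    then have "card SS \<le> card (Pow V)" using finV by (intro card_mono) auto
    then show ?thesis using finV cardV by (simp add: card_Pow)
  qed
  have "card U \<le> (\<Sum>S\<in>SS. card (bad S))" unfolding U_def using finSS by (rule card_UN_le)
  also have "\<dots> \<le> card SS * ((n - k) * q ^ t)" using badcard sum_bounded_above by (metis of_nat_id)
  also have "\<dots> \<le> 2 ^ n * ((n - k) * q ^ t)" using cardSS by simp
  finally have cardU: "card U \<le> 2 ^ n * ((n - k) * q ^ t)" .
  have "\<exists>\<rho>. \<rho> \<in> carrier R - {\<zero>} \<and> \<rho> \<notin> U"
  proof (rule ccontr)
    assume "\<not> ?thesis"
    then have sub: "carrier R - {\<zero>} \<subseteq> U" by blast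
    have "U \<subseteq> carrier R" unfolding U_def bad_def by auto
    then have "finite U" using finR finite_subset by blast
    then have "card (carrier R - {\<zero>}) \<le> card U" using sub card_mono by blast
    moreover have "card (carrier R - {\<zero>}) = card (carrier R) - 1" using finR by simp
    ultimately show False using cardU bigR by simp
  qed
  then obtain \<rho> where \<rho>: "\<rho> \<in> carrier R" "\<rho> \<noteq> \<zero>" "\<rho> \<notin> U" by blast
  have good: "\<forall>col\<in>S \<times> Y. w col = \<zero>"
    if S: "S \<subseteq> V" "card S = n - k" and w: "w \<in> S \<times> Y \<rightarrow> carrier R"
      and z: "\<forall>row\<in>Rw. mv R (cs_H R a b n d t q \<rho>) (S \<times> Y) w row = \<zero>" for S w
  proof (rule ccontr)
    assume nz: "\<not> ?thesis"
    have SYV: "S \<times> Y \<subseteq> V \<times> Y" using S by auto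
    have "\<forall>i\<in>Rw. mv R (\<lambda>i j. M0 i j \<oplus> \<rho> \<otimes> E0 i j) (S \<times> Y) w i = \<zero>"
      using z mvHeq[OF \<rho>(1) SYV _ w] by simp
    then have "\<rho> \<in> bad S" unfolding bad_def using \<rho> w nz by blast
    moreover have "S \<in> SS" unfolding SS_def using S by simp
    ultimately have "\<rho> \<in> U" unfolding U_def by blast
    then show False using \<rho>(3) by simp
  qed
  have Cdef: "cs_code R a b n k d t s \<rho> =
      {c \<in> V \<times> Y \<rightarrow>\<^sub>E carrier R. \<forall>row\<in>Rw. mv R (cs_H R a b n d t q \<rho>) (V \<times> Y) c row = \<zero>}"
    unfolding cs_code_def Let_def qd[symmetric] V_def Y_def Rw_def mv_def by auto
  interpret M: mds_setup R V Y Rw "cs_H R a b n d t q \<rho>" n k "cs_code R a b n k d t s \<rho>"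
  proof (unfold_locales)
    show "finite (carrier R)" "finite V" "finite Y" "Y \<noteq> {}" "finite Rw" "card V = n" "1 \<le> k" "k \<le> n"
      "card Rw = (n - k) * card Y"
      by (fact finR finV finY Yne finRw cardV k1 kn cardRw)+
    show "\<And>row col. row \<in> Rw \<Longrightarrow> col \<in> V \<times> Y \<Longrightarrow> cs_H R a b n d t q \<rho> row col \<in> carrier R"
      using Hc[OF \<rho>(1)] by blast
    show "\<And>S w. S \<subseteq> V \<Longrightarrow> card S = n - k \<Longrightarrow> w \<in> S \<times> Y \<rightarrow> carrier R \<Longrightarrow>
        \<forall>row\<in>Rw. mv R (cs_H R a b n d t q \<rho>) (S \<times> Y) w row = \<zero> \<Longrightarrow> \<forall>col\<in>S \<times> Y. w col = \<zero>"
      by (rule good)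
    show "cs_code R a b n k d t s \<rho> =
      {c \<in> V \<times> Y \<rightarrow>\<^sub>E carrier R. \<forall>row\<in>Rw. mv R (cs_H R a b n d t q \<rho>) (V \<times> Y) c row = \<zero>}"
      by (rule Cdef)
  qed
  have "is_vector_code R V Y (cs_code R a b n k d t s \<rho>) n (k * q ^ t) (n - k + 1) (q ^ t)"
    unfolding is_vector_code_def
    using cardV cardY M.subspace M.dim_and_witness M.min_dist by auto
  then show ?thesis using \<rho> unfolding V_def Y_def by blast
qed

end


theorem theorem1:
  fixes n k d t s :: nat
  assumes "1 \<le> k" and "k < d" and "d \<le> n - 1"
    and "1 < t" and "1 \<le> s" and "s \<le> d - k"
    and "n = (t - 1) * (d - k + 1) + s"
  shows "\<exists>Q0::nat. \<forall>(R :: nat ring) (a :: nat \<Rightarrow> nat) (b :: nat \<Rightarrow> nat).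
           field R \<and> finite (carrier R) \<and> Q0 \<le> card (carrier R) \<and>
           a ` {1..n-k} \<subseteq> carrier R \<and> b ` {1..n} \<subseteq> carrier R \<and>
           inj_on a {1..n-k} \<and> inj_on b {1..n} \<and> a ` {1..n-k} \<inter> b ` {1..n} = {}
           \<longrightarrow> (\<exists>\<rho>\<in>carrier R - {zero R}.
                 is_vector_code R (cs_nodes t (d - k + 1) s) (cs_states t (d - k + 1))
                   (cs_code R a b n k d t s \<rho>) n (k * (d - k + 1) ^ t) (n - k + 1) ((d - k + 1) ^ t))"
proof (intro exI[of _ "2 ^ n * ((n - k) * (d - k + 1) ^ t) + 2"] allI impI)
  fix R :: "nat ring" and a b :: "nat \<Rightarrow> nat"
  assume H: "field R \<and> finite (carrier R) \<and> 2 ^ n * ((n - k) * (d - k + 1) ^ t) + 2 \<le> card (carrier R) \<and>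
           a ` {1..n-k} \<subseteq> carrier R \<and> b ` {1..n} \<subseteq> carrier R \<and>
           inj_on a {1..n-k} \<and> inj_on b {1..n} \<and> a ` {1..n-k} \<inter> b ` {1..n} = {}"
  then have fR: "field R" by blast
  show "\<exists>\<rho>\<in>carrier R - {zero R}.
                 is_vector_code R (cs_nodes t (d - k + 1) s) (cs_states t (d - k + 1))
                   (cs_code R a b n k d t s \<rho>) n (k * (d - k + 1) ^ t) (n - k + 1) ((d - k + 1) ^ t)"
  proof (rule field.main_aux[OF fR assms(1-7) refl])
    show "finite (carrier R)" using H by blast
    show "2 ^ n * ((n - k) * (d - k + 1) ^ t) + 2 \<le> card (carrier R)" using H by blast
    show "a ` {1..n-k} \<subseteq> carrier R" using H by blast
    show "b ` {1..n} \<subseteq> carrier R" using H by blast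
    show "inj_on a {1..n-k}" using H by blast
    show "inj_on b {1..n}" using H by blast
    show "a ` {1..n-k} \<inter> b ` {1..n} = {}" using H by blast
  qed
qed

end
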